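(* Let $N\geqslant3$, $s\in(0,1)$ and $p\in(2^*_s,2^* )$. For all $u\in\mathcal M$ we have $P'(u)\neq0$.
   Context: $2^*=\frac{2N}{N-2}$, $2^*_s=\frac{2N}{N-2s}$. $\|u\|_{D^{1,2}}^2=\int_{\mathbb{R}^N}|\nabla u|^2\,\mathrm{d}x$, $\|u\|_{D^{s,2}}^2=\int_{\mathbb{R}^N}\int_{\mathbb{R}^N}\frac{|u(x)-u(y)|^2}{|x-y|^{N+2s}}\,\mathrm{d}x\,\mathrm{d}y$; $E$ is the completion of $C_0^\infty(\mathbb{R}^N)$ under $\|u\|_E^2=\|u\|_{D^{1,2}}^2+\|u\|_{D^{s,2}}^2$. $P(u)=\frac{N-2}{2}\|u\|_{D^{1,2}}^2+\frac{N-2s}{2}\|u\|_{D^{s,2}}^2-\frac Np\int_{\mathbb{R}^N}|u|^p\,\mathrm{d}x$, a $C^1$ functional on $E$; $\mathcal M=\{u\in E\setminus\{0\}:P(u)=0\}$. *)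

theory Defs
  imports "HOL-Analysis.Analysis"
begin

text \<open>Functions on R^N are modelled as real ^ 'n => real with N = CARD('n).\<close>

definition critS :: "nat \<Rightarrow> real" where
  "critS N = 2 * real N / (real N - 2)"

definition critFrac :: "nat \<Rightarrow> real \<Rightarrow> real" where
  "critFrac N s = 2 * real N / (real N - 2 * s)"

fun iter_partial :: "'n::finite list \<Rightarrow> (real ^ 'n \<Rightarrow> real) \<Rightarrow> real ^ 'n \<Rightarrow> real" where
  "iter_partial [] f = f"
| "iter_partial (i # is) f = (\<lambda>x. frechet_derivative (iter_partial is f) (at x) (axis i 1))"

text \<open>C_0^infinity: all iterated partial derivatives exist and are differentiable everywhere,
  and the function has bounded (hence compact closure) support.\<close>
definition test_fun :: "(real ^ 'n::finite \<Rightarrow> real) \<Rightarrow> bool" where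
  "test_fun f \<longleftrightarrow> (\<forall>is. \<forall>x. iter_partial is f differentiable (at x)) \<and> bounded {x. f x \<noteq> 0}"

definition grad_sq :: "(real ^ 'n::finite \<Rightarrow> real) \<Rightarrow> real ^ 'n \<Rightarrow> real" where
  "grad_sq f x = (\<Sum>i\<in>UNIV. (frechet_derivative f (at x) (axis i 1))^2)"

definition D12sq_test :: "(real ^ 'n::finite \<Rightarrow> real) \<Rightarrow> real" where
  "D12sq_test f = integral\<^sup>L lborel (grad_sq f)"

definition Gag_enn :: "real \<Rightarrow> (real ^ 'n::finite \<Rightarrow> real) \<Rightarrow> ennreal" where
  "Gag_enn s u = (\<integral>\<^sup>+ x. \<integral>\<^sup>+ y. ennreal ((u x - u y)^2 / (norm (x - y) powr (real CARD('n) + 2 * s))) \<partial>lborel \<partial>lborel)"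

definition Gag :: "real \<Rightarrow> (real ^ 'n::finite \<Rightarrow> real) \<Rightarrow> real" where
  "Gag s u = enn2real (Gag_enn s u)"

definition Lp_pow :: "real \<Rightarrow> (real ^ 'n::finite \<Rightarrow> real) \<Rightarrow> ennreal" where
  "Lp_pow q u = (\<integral>\<^sup>+ x. ennreal (\<bar>u x\<bar> powr q) \<partial>lborel)"

text \<open>phi is a sequence of test functions, Cauchy for the norm of E, whose limit
  (identified through the Sobolev embedding E into L^{2^*}) is u.\<close>
definition approx_seq :: "real \<Rightarrow> (real ^ 'n::finite \<Rightarrow> real) \<Rightarrow> (nat \<Rightarrow> real ^ 'n \<Rightarrow> real) \<Rightarrow> bool" where
  "approx_seq s u \<phi> \<longleftrightarrow>
     (\<forall>k. test_fun (\<phi> k)) \<and>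
     (\<forall>e>0. \<exists>K. \<forall>k\<ge>K. \<forall>m\<ge>K.
        D12sq_test (\<lambda>x. \<phi> k x - \<phi> m x) + Gag s (\<lambda>x. \<phi> k x - \<phi> m x) < e) \<and>
     ((\<lambda>k. Lp_pow (critS CARD('n)) (\<lambda>x. \<phi> k x - u x)) \<longlonglongrightarrow> 0)"

text \<open>The space E (completion of C_0^infinity under the norm of E), realized as functions.\<close>
definition Espace :: "real \<Rightarrow> (real ^ 'n::finite \<Rightarrow> real) set" where
  "Espace s = {u. u \<in> borel_measurable lborel \<and> (\<exists>\<phi>. approx_seq s u \<phi>)}"

text \<open>D^{1,2} seminorm squared on E, extended by continuity from test functions.\<close>
definition D12sq :: "real \<Rightarrow> (real ^ 'n::finite \<Rightarrow> real) \<Rightarrow> real" where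
  "D12sq s u = lim (\<lambda>k. D12sq_test ((SOME \<phi>. approx_seq s u \<phi>) k))"

definition Pfun :: "real \<Rightarrow> real \<Rightarrow> (real ^ 'n::finite \<Rightarrow> real) \<Rightarrow> real" where
  "Pfun s p u = (real CARD('n) - 2) / 2 * D12sq s u + (real CARD('n) - 2 * s) / 2 * Gag s u
     - real CARD('n) / p * integral\<^sup>L lborel (\<lambda>x. \<bar>u x\<bar> powr p)"

text \<open>Pohozaev manifold; u \<noteq> 0 in E means u is not a.e. zero.\<close>
definition Mset :: "real \<Rightarrow> real \<Rightarrow> (real ^ 'n::finite \<Rightarrow> real) set" where
  "Mset s p = {u \<in> Espace s. \<not> (AE x in lborel. u x = 0) \<and> Pfun s p u = 0}"

end

theory Submission
  imports Defs
begin

definition pd :: "'n::finite \<Rightarrow> (real ^ 'n \<Rightarrow> real) \<Rightarrow> real ^ 'n \<Rightarrow> real" where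
  "pd i f = (\<lambda>x. frechet_derivative f (at x) (axis i 1))"

lemma iter_partial_single: "iter_partial [i] f = pd i f"
  by (simp add: pd_def)

lemma iter_partial_append: "iter_partial is (iter_partial js f) = iter_partial (is @ js) f"
  by (induction "is") auto

definition smooth :: "(real ^ 'n::finite \<Rightarrow> real) \<Rightarrow> bool" where
  "smooth f \<longleftrightarrow> (\<forall>is. \<forall>x. iter_partial is f differentiable (at x))"

lemma test_fun_smooth: "test_fun f \<Longrightarrow> smooth f"
  by (simp add: test_fun_def smooth_def)

lemma fd_lin:
  fixes f g :: "real ^ 'n::finite \<Rightarrow> real"
  assumes "f differentiable (at x)" "g differentiable (at x)"
  shows "frechet_derivative (\<lambda>x. a * f x + b * g x) (at x) = (\<lambda>v. a * frechet_derivative f (at x) v + b * frechet_derivative g (at x) v)"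
proof -
  have "((\<lambda>x. a * f x + b * g x) has_derivative (\<lambda>v. a * frechet_derivative f (at x) v + b * frechet_derivative g (at x) v)) (at x)"
  proof (rule has_derivative_add)
    show "((\<lambda>x. a * f x) has_derivative (\<lambda>v. a * frechet_derivative f (at x) v)) (at x)"
      using assms(1)[unfolded frechet_derivative_works] by (auto intro!: derivative_eq_intros)
    show "((\<lambda>x. b * g x) has_derivative (\<lambda>v. b * frechet_derivative g (at x) v)) (at x)"
      using assms(2)[unfolded frechet_derivative_works] by (auto intro!: derivative_eq_intros)
  qed
  then show ?thesis by (rule frechet_derivative_at[symmetric])
qed

lemma iter_partial_lin:
  assumes "smooth f" "smooth g"
  shows "iter_partial is (\<lambda>x. a * f x + b * g x) = (\<lambda>x. a * iter_partial is f x + b * iter_partial is g x)"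
proof (induction "is")
  case Nil then show ?case by simp
next
  case (Cons i "is")
  show ?case
    using assms unfolding smooth_def
    by (simp add: Cons fd_lin)
qed

lemma smooth_lin:
  assumes "smooth f" "smooth g"
  shows "smooth (\<lambda>x. a * f x + b * g x)"
  unfolding smooth_def iter_partial_lin[OF assms]
  using assms unfolding smooth_def
  by (auto intro!: differentiable_compose[where f="\<lambda>x. x"] derivative_intros)

lemma test_fun_lin:
  assumes "test_fun f" "test_fun g"
  shows "test_fun (\<lambda>x. a * f x + b * g x)"
proof -
  have "{x. a * f x + b * g x \<noteq> 0} \<subseteq> {x. f x \<noteq> 0} \<union> {x. g x \<noteq> 0}" by auto
  then have "bounded {x. a * f x + b * g x \<noteq> 0}"
    using assms unfolding test_fun_def by (meson bounded_Un bounded_subset)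
  then show ?thesis
    using smooth_lin[OF test_fun_smooth[OF assms(1)] test_fun_smooth[OF assms(2)]]
    unfolding test_fun_def smooth_def by blast
qed

lemma test_fun_diff:
  assumes "test_fun f" "test_fun g"
  shows "test_fun (\<lambda>x. f x - g x)"
  using test_fun_lin[OF assms, of 1 "-1"] by simp

lemma test_fun_cmult:
  assumes "test_fun f"
  shows "test_fun (\<lambda>x. c * f x)"
  using test_fun_lin[OF assms assms, of c 0] by simp

lemma test_fun_support:
  assumes "test_fun f"
  obtains R where "R > 0" "\<And>is x. R < norm x \<Longrightarrow> iter_partial is f x = 0"
proof -
  obtain R0 where R0: "\<And>x. f x \<noteq> 0 \<Longrightarrow> norm x \<le> R0"
    using assms unfolding test_fun_def bounded_iff by auto
  define R where "R = max R0 1"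
  have R: "R > 0" "\<And>x. f x \<noteq> 0 \<Longrightarrow> norm x \<le> R"
    using R0 unfolding R_def by force+
  have "\<forall>x. R < norm x \<longrightarrow> iter_partial is f x = 0" for "is"
  proof (induction "is")
    case Nil then show ?case using R(2) by force
  next
    case (Cons i "is")
    show ?case
    proof (intro allI impI)
      fix x :: "real ^ 'a" assume x: "R < norm x"
      have "((\<lambda>y. 0) has_derivative (\<lambda>v. 0)) (at x)" by simp
      then have "(iter_partial is f has_derivative (\<lambda>v. 0)) (at x)"
        by (rule has_derivative_transform_within_open[where s="{y. R < norm y}"])
           (use x Cons in \<open>auto intro: open_Collect_less continuous_intros\<close>)
      then have "frechet_derivative (iter_partial is f) (at x) = (\<lambda>v. 0)"
        by (rule frechet_derivative_at[symmetric])
      then show "iter_partial (i # is) f x = 0" by simp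
    qed
  qed
  then show ?thesis using that R by blast
qed

lemma smooth_cont: "smooth f \<Longrightarrow> continuous_on UNIV (iter_partial is f)"
  unfolding smooth_def
  by (meson continuous_at_imp_continuous_on differentiable_imp_continuous_within)

lemma cs_integrable:
  fixes g :: "real ^ 'n::finite \<Rightarrow> real"
  assumes "continuous_on UNIV g" "\<And>x. R < norm x \<Longrightarrow> g x = 0"
  shows "integrable lborel g"
proof -
  have "integrable lborel (\<lambda>x. indicator (cball 0 R) x *\<^sub>R g x)"
    by (rule borel_integrable_compact) (use assms in \<open>auto intro: continuous_on_subset\<close>)
  also have "(\<lambda>x. indicator (cball 0 R) x *\<^sub>R g x) = g"
    using assms(2) by (auto simp: fun_eq_iff indicator_def)
  finally show ?thesis .
qed

lemma cs_bounded:
  fixes g :: "real ^ 'n::finite \<Rightarrow> real"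
  assumes "continuous_on UNIV g" "\<And>x. R < norm x \<Longrightarrow> g x = 0"
  obtains M where "M \<ge> 0" "\<And>x. \<bar>g x\<bar> \<le> M"
proof -
  have "compact (g ` cball 0 R)"
    by (rule compact_continuous_image) (use assms in \<open>auto intro: continuous_on_subset\<close>)
  then obtain M0 where M0: "\<And>y. y \<in> g ` cball 0 R \<Longrightarrow> norm y \<le> M0"
    using compact_imp_bounded bounded_iff by metis
  show ?thesis
  proof (rule that[of "max M0 0"])
    fix x show "\<bar>g x\<bar> \<le> max M0 0"
      using M0[of "g x"] assms(2)[of x] by (cases "norm x \<le> R") auto
  qed simp
qed

lemma test_fun_cont: "test_fun f \<Longrightarrow> continuous_on UNIV (iter_partial is f)"
  by (simp add: smooth_cont test_fun_smooth)

lemma test_fun_iter: 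
  assumes "test_fun f" shows "test_fun (iter_partial js f)"
proof -
  obtain R where R: "R > 0" "\<And>is x. R < norm x \<Longrightarrow> iter_partial is f x = 0"
    using test_fun_support[OF assms] by blast
  have "bounded {x. iter_partial js f x \<noteq> 0}"
    by (rule bounded_subset[OF bounded_cball[of 0 R]]) (use R in \<open>force\<close>)
  then show ?thesis using assms unfolding test_fun_def iter_partial_append by auto
qed

lemma test_fun_pd: "test_fun f \<Longrightarrow> test_fun (pd i f)"
  using test_fun_iter[of f "[i]"] by (simp add: pd_def)

lemma test_fun_support0:
  assumes "test_fun f"
  obtains R where "R > 0" "\<And>x. R < norm x \<Longrightarrow> f x = 0"
proof -
  obtain R where R: "R > 0" "\<And>is x. R < norm x \<Longrightarrow> iter_partial is f x = 0"
    using test_fun_support[OF assms] by blast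
  show ?thesis using that[of R] R(1) R(2)[of _ "[]"] by auto
qed

lemma test_fun_cont0: "test_fun f \<Longrightarrow> continuous_on UNIV f"
  using test_fun_cont[of f "[]"] by simp

lemma test_fun_integrable: "test_fun f \<Longrightarrow> integrable lborel f"
  using test_fun_support0[of f] test_fun_cont0[of f] cs_integrable[of f] by metis

lemma test_fun_bounded:
  assumes "test_fun f" obtains M where "M \<ge> 0" "\<And>x. \<bar>f x\<bar> \<le> M"
  using test_fun_support0[OF assms] test_fun_cont0[OF assms] cs_bounded[of f] by metis

lemma test_fun_mult_integrable:
  assumes "test_fun f" "test_fun g" shows "integrable lborel (\<lambda>x. f x * g x)"
proof -
  obtain R where R: "R > 0" "\<And>x. R < norm x \<Longrightarrow> f x = 0"
    using test_fun_support0[OF assms(1)] by blast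
  show ?thesis
    by (rule cs_integrable[where R=R])
       (use test_fun_cont0[OF assms(1)] test_fun_cont0[OF assms(2)] R(2)
        in \<open>auto intro!: continuous_intros\<close>)
qed

lemma test_fun_measurable: "test_fun f \<Longrightarrow> f \<in> borel_measurable borel"
  using test_fun_cont0[of f] by (simp add: borel_measurable_continuous_onI)

lemma test_fun_diffble: "test_fun f \<Longrightarrow> f differentiable (at x)"
  using test_fun_smooth[of f] unfolding smooth_def by (metis iter_partial.simps(1))

lemma fd_bound:
  fixes f :: "real ^ 'n::finite \<Rightarrow> real"
  assumes "f differentiable (at x)"
  shows "\<bar>frechet_derivative f (at x) v\<bar> \<le> (\<Sum>i\<in>UNIV. \<bar>pd i f x\<bar>) * norm v"
proof -
  have lin: "linear (frechet_derivative f (at x))"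
    using assms unfolding frechet_derivative_works
    using has_derivative_linear by blast
  have "frechet_derivative f (at x) v = frechet_derivative f (at x) (\<Sum>i\<in>UNIV. (v$i) *s axis i 1)"
    by (simp add: basis_expansion)
  also have "\<dots> = (\<Sum>i\<in>UNIV. v$i * pd i f x)"
    using lin by (simp add: linear_sum linear_cmul pd_def scalar_mult_eq_scaleR)
  finally have "\<bar>frechet_derivative f (at x) v\<bar> = \<bar>\<Sum>i\<in>UNIV. v$i * pd i f x\<bar>" by simp
  also have "\<dots> \<le> (\<Sum>i\<in>UNIV. \<bar>v$i * pd i f x\<bar>)" by (rule sum_abs)
  also have "\<dots> \<le> (\<Sum>i\<in>UNIV. norm v * \<bar>pd i f x\<bar>)"
    by (intro sum_mono) (simp add: abs_mult mult_right_mono component_le_norm_cart)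
  finally show ?thesis by (simp add: sum_distrib_left mult.commute)
qed

lemma test_fun_lipschitz:
  assumes "test_fun f"
  obtains L where "L \<ge> 0" "\<And>x y. \<bar>f x - f y\<bar> \<le> L * norm (x - y)"
proof -
  have "\<forall>i. \<exists>M. M \<ge> 0 \<and> (\<forall>x. \<bar>pd i f x\<bar> \<le> M)"
    using test_fun_bounded[OF test_fun_pd[OF assms]] by metis
  then obtain M where M: "\<And>i. M i \<ge> 0" "\<And>i x. \<bar>pd i f x\<bar> \<le> M i" by metis
  define L where "L = (\<Sum>i\<in>UNIV. M i)"
  have L: "L \<ge> 0" unfolding L_def using M(1) by (simp add: sum_nonneg)
  have "norm (f x - f y) \<le> L * norm (x - y)" for x y
  proof (rule differentiable_bound[where S=UNIV and f'="\<lambda>x. frechet_derivative f (at x)"])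
    show "(f has_derivative frechet_derivative f (at z)) (at z within UNIV)" for z
      using test_fun_diffble[OF assms] frechet_derivative_works by auto
    show "onorm (frechet_derivative f (at z)) \<le> L" for z
    proof (rule onorm_le)
      fix v
      have "\<bar>frechet_derivative f (at z) v\<bar> \<le> (\<Sum>i\<in>UNIV. \<bar>pd i f z\<bar>) * norm v"
        by (rule fd_bound[OF test_fun_diffble[OF assms]])
      also have "\<dots> \<le> L * norm v"
        unfolding L_def by (intro mult_right_mono sum_mono M(2)) auto
      finally show "norm (frechet_derivative f (at z) v) \<le> L * norm v" by simp
    qed
  qed auto
  then show ?thesis using that L by auto
qed

lemma pd_lin:
  assumes "test_fun f" "test_fun g"
  shows "pd i (\<lambda>x. a * f x + b * g x) x = a * pd i f x + b * pd i g x"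
  using iter_partial_lin[OF test_fun_smooth[OF assms(1)] test_fun_smooth[OF assms(2)], of "[i]" a b]
  by (simp add: pd_def fun_eq_iff)

definition Bf :: "(real ^ 'n::finite \<Rightarrow> real) \<Rightarrow> (real ^ 'n \<Rightarrow> real) \<Rightarrow> real" where
  "Bf f g = (\<Sum>i\<in>UNIV. integral\<^sup>L lborel (\<lambda>x. pd i f x * pd i g x))"

lemma pd_integrable:
  assumes "test_fun f" "test_fun g" shows "integrable lborel (\<lambda>x. pd i f x * pd j g x)"
  using test_fun_mult_integrable[OF test_fun_pd[OF assms(1)] test_fun_pd[OF assms(2)]] .

lemma D12_eq_Bf:
  assumes "test_fun f" shows "D12sq_test f = Bf f f"
proof -
  have "D12sq_test f = integral\<^sup>L lborel (\<lambda>x. \<Sum>i\<in>UNIV. pd i f x * pd i f x)"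
    unfolding D12sq_test_def grad_sq_def pd_def by (simp add: power2_eq_square)
  also have "\<dots> = Bf f f"
    unfolding Bf_def by (rule Bochner_Integration.integral_sum[where f="\<lambda>i x. pd i f x * pd i f x"]) (rule pd_integrable[OF assms assms])
  finally show ?thesis .
qed

lemma Bf_sym: "Bf f g = Bf g f"
  unfolding Bf_def by (simp add: mult.commute)

lemma Bf_lin:
  assumes "test_fun f" "test_fun g" "test_fun h"
  shows "Bf (\<lambda>x. a * f x + b * g x) h = a * Bf f h + b * Bf g h"
proof -
  have "Bf (\<lambda>x. a * f x + b * g x) h =
     (\<Sum>i\<in>UNIV. integral\<^sup>L lborel (\<lambda>x. a * (pd i f x * pd i h x) + b * (pd i g x * pd i h x)))"
    unfolding Bf_def pd_lin[OF assms(1,2)] by (simp add: algebra_simps)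
  also have "\<dots> = (\<Sum>i\<in>UNIV. a * integral\<^sup>L lborel (\<lambda>x. pd i f x * pd i h x) + b * integral\<^sup>L lborel (\<lambda>x. pd i g x * pd i h x))"
    by (intro sum.cong refl)
       (simp add: pd_integrable[OF assms(1,3)] pd_integrable[OF assms(2,3)])
  also have "\<dots> = a * Bf f h + b * Bf g h"
    unfolding Bf_def by (simp add: sum.distrib sum_distrib_left)
  finally show ?thesis .
qed

lemma Bf_nonneg: "Bf f f \<ge> 0"
  unfolding Bf_def by (intro sum_nonneg integral_nonneg_AE) auto

lemma Q_lin:
  assumes "test_fun f" "test_fun g"
  shows "D12sq_test (\<lambda>x. a * f x + b * g x) = a^2 * D12sq_test f + 2 * a * b * Bf f g + b^2 * D12sq_test g"
proof -
  have t: "test_fun (\<lambda>x. a * f x + b * g x)" by (rule test_fun_lin[OF assms])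
  have "D12sq_test (\<lambda>x. a * f x + b * g x) = Bf (\<lambda>x. a * f x + b * g x) (\<lambda>x. a * f x + b * g x)"
    by (rule D12_eq_Bf[OF t])
  also have "\<dots> = a * Bf f (\<lambda>x. a * f x + b * g x) + b * Bf g (\<lambda>x. a * f x + b * g x)"
    by (rule Bf_lin[OF assms t])
  also have "\<dots> = a * (a * Bf f f + b * Bf g f) + b * (a * Bf f g + b * Bf g g)"
    using Bf_sym[of f "\<lambda>x. a * f x + b * g x"] Bf_sym[of g "\<lambda>x. a * f x + b * g x"]
      Bf_lin[OF assms assms(1), of a b] Bf_lin[OF assms assms(2), of a b] by simp
  also have "\<dots> = a^2 * D12sq_test f + 2 * a * b * Bf f g + b^2 * D12sq_test g"
    using Bf_sym[of g f] by (simp add: D12_eq_Bf[OF assms(1)] D12_eq_Bf[OF assms(2)] power2_eq_square algebra_simps)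
  finally show ?thesis .
qed

lemma Q_nonneg: "test_fun f \<Longrightarrow> D12sq_test f \<ge> 0"
  by (simp add: D12_eq_Bf Bf_nonneg)

lemma Bf_CS:
  assumes "test_fun f" "test_fun g"
  shows "\<bar>Bf f g\<bar> \<le> sqrt (D12sq_test f) * sqrt (D12sq_test g)"
proof -
  define A where "A = D12sq_test f"
  define C where "C = D12sq_test g"
  define B where "B = Bf f g"
  have A: "A \<ge> 0" and C: "C \<ge> 0" unfolding A_def C_def using Q_nonneg assms by auto
  have key: "t^2 * A - 2 * t * B + C \<ge> 0" for t
    using Q_lin[OF assms, of t "-1"] Q_nonneg[OF test_fun_lin[OF assms, of t "-1"]]
    unfolding A_def B_def C_def by simp
  have "B^2 \<le> A * C"
  proof (cases "A = 0")
    case True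
    have "B = 0"
    proof (rule ccontr)
      assume "B \<noteq> 0"
      then have "2 * ((C + 1) / (2 * B)) * B = C + 1" by (simp add: field_simps)
      then show False using key[of "(C + 1) / (2 * B)"] True by simp
    qed
    then show ?thesis using True by simp
  next
    case False
    then have "A > 0" using A by simp
    have "0 \<le> (B / A)^2 * A - 2 * (B / A) * B + C" by (rule key)
    also have "\<dots> = C - B^2 / A" using \<open>A > 0\<close> by (simp add: field_simps power2_eq_square)
    finally show ?thesis using \<open>A > 0\<close> by (simp add: field_simps)
  qed
  then have "sqrt (B^2) \<le> sqrt (A * C)" by (rule real_sqrt_le_mono)
  then show ?thesis unfolding A_def B_def C_def by (simp add: real_sqrt_mult)
qed

definition nQ :: "(real ^ 'n::finite \<Rightarrow> real) \<Rightarrow> real" where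
  "nQ f = sqrt (D12sq_test f)"

lemma nQ_nonneg: "nQ f \<ge> 0"
  unfolding nQ_def D12sq_test_def grad_sq_def
  by (simp add: integral_nonneg_AE sum_nonneg)

lemma nQ_lin:
  assumes "test_fun f" "test_fun g"
  shows "nQ (\<lambda>x. a * f x + b * g x) \<le> \<bar>a\<bar> * nQ f + \<bar>b\<bar> * nQ g"
proof -
  have "D12sq_test (\<lambda>x. a * f x + b * g x) = a^2 * D12sq_test f + 2 * a * b * Bf f g + b^2 * D12sq_test g"
    by (rule Q_lin[OF assms])
  also have "\<dots> \<le> a^2 * D12sq_test f + 2 * \<bar>a\<bar> * \<bar>b\<bar> * (nQ f * nQ g) + b^2 * D12sq_test g"
  proof -
    have "2 * a * b * Bf f g \<le> 2 * \<bar>a\<bar> * \<bar>b\<bar> * \<bar>Bf f g\<bar>"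
      by (simp add: abs_mult[symmetric] mult.assoc)
    also have "\<dots> \<le> 2 * \<bar>a\<bar> * \<bar>b\<bar> * (nQ f * nQ g)"
      using Bf_CS[OF assms] unfolding nQ_def by (intro mult_left_mono) auto
    finally show ?thesis by simp
  qed
  also have "\<dots> = (\<bar>a\<bar> * nQ f + \<bar>b\<bar> * nQ g)^2"
  proof -
    have e: "(\<bar>a\<bar> * x + \<bar>b\<bar> * y)^2 = a^2 * x^2 + 2 * \<bar>a\<bar> * \<bar>b\<bar> * (x * y) + b^2 * y^2" for x y :: real
      by (simp add: power2_sum power_mult_distrib)
    have "nQ f ^ 2 = D12sq_test f" "nQ g ^ 2 = D12sq_test g"
      using Q_nonneg[OF assms(1)] Q_nonneg[OF assms(2)] by (simp_all add: nQ_def)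
    then show ?thesis using e[of "nQ f" "nQ g"] by simp
  qed
  finally have H: "D12sq_test (\<lambda>x. a * f x + b * g x) \<le> (\<bar>a\<bar> * nQ f + \<bar>b\<bar> * nQ g)^2" .
  have "nQ (\<lambda>x. a * f x + b * g x) = sqrt (D12sq_test (\<lambda>x. a * f x + b * g x))" by (rule nQ_def)
  also have "\<dots> \<le> sqrt ((\<bar>a\<bar> * nQ f + \<bar>b\<bar> * nQ g)^2)" using H by (rule real_sqrt_le_mono)
  also have "\<dots> = \<bar>a\<bar> * nQ f + \<bar>b\<bar> * nQ g" using nQ_nonneg[of f] nQ_nonneg[of g] by simp
  finally show ?thesis .
qed

lemma nQ_cmult:
  assumes "test_fun f" shows "nQ (\<lambda>x. c * f x) = \<bar>c\<bar> * nQ f"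
  using Q_lin[OF assms assms, of c 0] unfolding nQ_def by (simp add: real_sqrt_mult)

lemma Q_cmult:
  assumes "test_fun f" shows "D12sq_test (\<lambda>x. c * f x) = c^2 * D12sq_test f"
  using Q_lin[OF assms assms, of c 0] by simp

lemma nQ_diff_le:
  assumes "test_fun f" "test_fun g"
  shows "\<bar>nQ f - nQ g\<bar> \<le> nQ (\<lambda>x. f x - g x)"
proof -
  have d: "test_fun (\<lambda>x. f x - g x)" by (rule test_fun_diff[OF assms])
  have "nQ f = nQ (\<lambda>x. 1 * (f x - g x) + 1 * g x)" by simp
  also have "\<dots> \<le> nQ (\<lambda>x. f x - g x) + nQ g" using nQ_lin[OF d assms(2), of 1 1] by simp
  finally have 1: "nQ f \<le> nQ (\<lambda>x. f x - g x) + nQ g" .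
  have "nQ g = nQ (\<lambda>x. (-1) * (f x - g x) + 1 * f x)" by simp
  also have "\<dots> \<le> nQ (\<lambda>x. f x - g x) + nQ f" using nQ_lin[OF d assms(1), of "-1" 1] by simp
  finally have 2: "nQ g \<le> nQ (\<lambda>x. f x - g x) + nQ f" .
  show ?thesis using 1 2 by linarith
qed

lemma transl_integral:
  fixes G :: "real ^ 'n::finite \<Rightarrow> real"
  assumes [measurable]: "G \<in> borel_measurable borel"
  shows "integral\<^sup>L lborel (\<lambda>x. G (c + x)) = integral\<^sup>L lborel G"
proof -
  have "integral\<^sup>L lborel G = integral\<^sup>L (distr lborel borel ((+) c)) G"
    by (simp add: lborel_distr_plus)
  also have "\<dots> = integral\<^sup>L lborel (\<lambda>x. G (c + x))"
    by (rule integral_distr) auto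
  finally show ?thesis by simp
qed

lemma cont_shift:
  fixes f :: "real ^ 'n::finite \<Rightarrow> real"
  assumes "continuous_on UNIV f"
  shows "continuous_on UNIV (\<lambda>x. f (x + c))"
  by (rule continuous_on_compose2[OF assms]) (auto intro!: continuous_intros)

lemma cont_shift':
  fixes f :: "real ^ 'n::finite \<Rightarrow> real"
  assumes "continuous_on UNIV f"
  shows "continuous_on UNIV (\<lambda>x. f (x - c))"
  by (rule continuous_on_compose2[OF assms]) (auto intro!: continuous_intros)

lemma dq_lim:
  fixes g :: "real ^ 'n::finite \<Rightarrow> real"
  assumes "g differentiable (at x)" "\<tau> \<longlonglongrightarrow> 0" "\<And>n. \<tau> n \<noteq> 0"
  shows "(\<lambda>n. (g (x + \<tau> n *\<^sub>R e) - g x) / \<tau> n) \<longlonglongrightarrow> frechet_derivative g (at x) e"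
proof -
  define D where "D = frechet_derivative g (at x) e"
  have gd: "(g has_derivative frechet_derivative g (at x)) (at x)"
    using assms(1) frechet_derivative_works by blast
  have lin: "linear (frechet_derivative g (at x))"
    using gd has_derivative_linear by blast
  have l: "((\<lambda>t::real. x + t *\<^sub>R e) has_derivative (\<lambda>t. t *\<^sub>R e)) (at 0)"
    by (auto intro!: derivative_eq_intros)
  have "((g \<circ> (\<lambda>t::real. x + t *\<^sub>R e)) has_derivative (frechet_derivative g (at x) \<circ> (\<lambda>t. t *\<^sub>R e))) (at 0)"
    by (rule diff_chain_at[OF l]) (simp add: gd)
  moreover have "(frechet_derivative g (at x) \<circ> (\<lambda>t. t *\<^sub>R e)) = (*) D"
    using lin by (auto simp: fun_eq_iff D_def linear_cmul)
  ultimately have "((\<lambda>t. g (x + t *\<^sub>R e)) has_field_derivative D) (at 0)"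
    by (simp add: has_field_derivative_def o_def)
  then have lim: "((\<lambda>h. (g (x + h *\<^sub>R e) - g x) / h) \<longlongrightarrow> D) (at 0)"
    unfolding DERIV_def by simp
  have "filterlim \<tau> (at 0) sequentially"
    using assms(2,3) by (simp add: filterlim_at)
  from filterlim_compose[OF lim this] show ?thesis unfolding D_def by simp
qed

lemma cs_integrable':
  fixes g :: "real ^ 'n::finite \<Rightarrow> real"
  assumes "continuous_on UNIV g" "\<And>x. R < norm x \<Longrightarrow> g x = 0"
  shows "integrable lborel g"
  by (rule cs_integrable[OF assms])

lemma IBP:
  assumes f: "test_fun f" and h: "test_fun h"
  shows "integral\<^sup>L lborel (\<lambda>x. pd i f x * h x) = - integral\<^sup>L lborel (\<lambda>x. f x * pd i h x)"
proof -
  define e :: "real ^ 'a" where "e = axis i 1"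
  define \<tau> :: "nat \<Rightarrow> real" where "\<tau> n = inverse (real (Suc n))" for n
  have \<tau>0: "\<tau> n \<noteq> 0" for n unfolding \<tau>_def by simp
  have \<tau>lim: "\<tau> \<longlonglongrightarrow> 0" unfolding \<tau>_def by (rule LIMSEQ_inverse_real_of_nat)
  have ne: "norm e = 1" unfolding e_def by simp
  note [measurable] = test_fun_measurable[OF f] test_fun_measurable[OF h]
    test_fun_measurable[OF test_fun_pd[OF f]] test_fun_measurable[OF test_fun_pd[OF h]]
  note cf = test_fun_cont0[OF f] and ch = test_fun_cont0[OF h]
  obtain Rh where Rh: "\<And>x. Rh < norm x \<Longrightarrow> h x = 0" using test_fun_support0[OF h] by blast
  obtain Rf where Rf: "\<And>x. Rf < norm x \<Longrightarrow> f x = 0" using test_fun_support0[OF f] by blast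
  obtain Lf where Lf: "Lf \<ge> 0" "\<And>x y. \<bar>f x - f y\<bar> \<le> Lf * norm (x - y)"
    using test_fun_lipschitz[OF f] by blast
  obtain Lh where Lh: "Lh \<ge> 0" "\<And>x y. \<bar>h x - h y\<bar> \<le> Lh * norm (x - y)"
    using test_fun_lipschitz[OF h] by blast
  have fi: "integrable lborel (\<lambda>x. f x * h x)" by (rule test_fun_mult_integrable[OF f h])
  have eq: "integral\<^sup>L lborel (\<lambda>x. (f (x + \<tau> n *\<^sub>R e) - f x) / \<tau> n * h x) =
            integral\<^sup>L lborel (\<lambda>x. f x * ((h (x + (- \<tau> n) *\<^sub>R e) - h x) / \<tau> n))" for n
  proof -
    let ?c = "\<tau> n *\<^sub>R e"
    have i1: "integrable lborel (\<lambda>x. f (x + ?c) * h x)"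
      by (rule cs_integrable[where R=Rh]) (use Rh in \<open>auto intro!: continuous_intros cont_shift cf ch\<close>)
    have i2: "integrable lborel (\<lambda>x. f x * h (x + (- \<tau> n) *\<^sub>R e))"
      by (rule cs_integrable[where R=Rf]) (use Rf in \<open>auto intro!: continuous_intros cont_shift cont_shift' cf ch\<close>)
    have tr: "integral\<^sup>L lborel (\<lambda>x. f (x + ?c) * h x) = integral\<^sup>L lborel (\<lambda>x. f x * h (x + (- \<tau> n) *\<^sub>R e))"
    proof -
      have "integral\<^sup>L lborel (\<lambda>x. f x * h (x + (- \<tau> n) *\<^sub>R e)) =
            integral\<^sup>L lborel (\<lambda>x. f (?c + x) * h (?c + x + (- \<tau> n) *\<^sub>R e))"
        by (rule transl_integral[symmetric]) measurable
      also have "\<dots> = integral\<^sup>L lborel (\<lambda>x. f (x + ?c) * h x)"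
        by (simp add: add.commute algebra_simps)
      finally show ?thesis by simp
    qed
    have "integral\<^sup>L lborel (\<lambda>x. (f (x + \<tau> n *\<^sub>R e) - f x) / \<tau> n * h x) =
          integral\<^sup>L lborel (\<lambda>x. (f (x + ?c) * h x - f x * h x) / \<tau> n)"
      by (simp add: algebra_simps diff_divide_distrib)
    also have "\<dots> = (integral\<^sup>L lborel (\<lambda>x. f (x + ?c) * h x) - integral\<^sup>L lborel (\<lambda>x. f x * h x)) / \<tau> n"
      using i1 fi by simp
    also have "\<dots> = (integral\<^sup>L lborel (\<lambda>x. f x * h (x + (- \<tau> n) *\<^sub>R e)) - integral\<^sup>L lborel (\<lambda>x. f x * h x)) / \<tau> n"
      by (simp add: tr)
    also have "\<dots> = integral\<^sup>L lborel (\<lambda>x. (f x * h (x + (- \<tau> n) *\<^sub>R e) - f x * h x) / \<tau> n)"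
      using i2 fi by simp
    also have "\<dots> = integral\<^sup>L lborel (\<lambda>x. f x * ((h (x + (- \<tau> n) *\<^sub>R e) - h x) / \<tau> n))"
      by (simp add: algebra_simps diff_divide_distrib)
    finally show ?thesis .
  qed
  have L1: "(\<lambda>n. integral\<^sup>L lborel (\<lambda>x. (f (x + \<tau> n *\<^sub>R e) - f x) / \<tau> n * h x))
      \<longlonglongrightarrow> integral\<^sup>L lborel (\<lambda>x. pd i f x * h x)"
  proof (rule integral_dominated_convergence[where w="\<lambda>x. Lf * \<bar>h x\<bar>"])
    show "integrable lborel (\<lambda>x. Lf * \<bar>h x\<bar>)"
      using test_fun_integrable[OF h] by auto
    show "AE x in lborel. (\<lambda>n. (f (x + \<tau> n *\<^sub>R e) - f x) / \<tau> n * h x) \<longlonglongrightarrow> pd i f x * h x"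
    proof (rule AE_I2)
      fix x
      show "(\<lambda>n. (f (x + \<tau> n *\<^sub>R e) - f x) / \<tau> n * h x) \<longlonglongrightarrow> pd i f x * h x"
        unfolding pd_def e_def
        by (intro tendsto_mult tendsto_const dq_lim test_fun_diffble[OF f] \<tau>lim \<tau>0)
    qed
    show "AE x in lborel. norm ((f (x + \<tau> n *\<^sub>R e) - f x) / \<tau> n * h x) \<le> Lf * \<bar>h x\<bar>" for n
    proof (rule AE_I2)
      fix x
      have "\<bar>f (x + \<tau> n *\<^sub>R e) - f x\<bar> \<le> Lf * \<bar>\<tau> n\<bar>" using Lf(2)[of "x + \<tau> n *\<^sub>R e" x] ne by simp
      then have "\<bar>(f (x + \<tau> n *\<^sub>R e) - f x) / \<tau> n\<bar> \<le> Lf"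
        using \<tau>0[of n] by (simp add: abs_divide divide_le_eq)
      then have "\<bar>(f (x + \<tau> n *\<^sub>R e) - f x) / \<tau> n\<bar> * \<bar>h x\<bar> \<le> Lf * \<bar>h x\<bar>"
        by (rule mult_right_mono) simp
      then show "norm ((f (x + \<tau> n *\<^sub>R e) - f x) / \<tau> n * h x) \<le> Lf * \<bar>h x\<bar>"
        by (simp only: real_norm_def abs_mult)
    qed
  qed measurable
  have L2: "(\<lambda>n. integral\<^sup>L lborel (\<lambda>x. f x * ((h (x + (- \<tau> n) *\<^sub>R e) - h x) / \<tau> n)))
      \<longlonglongrightarrow> integral\<^sup>L lborel (\<lambda>x. - (f x * pd i h x))"
  proof (rule integral_dominated_convergence[where w="\<lambda>x. \<bar>f x\<bar> * Lh"])
    show "integrable lborel (\<lambda>x. \<bar>f x\<bar> * Lh)"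
      using test_fun_integrable[OF f] by auto
    show "AE x in lborel. (\<lambda>n. f x * ((h (x + (- \<tau> n) *\<^sub>R e) - h x) / \<tau> n)) \<longlonglongrightarrow> - (f x * pd i h x)"
    proof (rule AE_I2)
      fix x
      have "(\<lambda>n. (h (x + (- \<tau> n) *\<^sub>R e) - h x) / (- \<tau> n)) \<longlonglongrightarrow> pd i h x"
        unfolding pd_def e_def
        by (intro dq_lim test_fun_diffble[OF h]) (use \<tau>lim \<tau>0 tendsto_minus[OF \<tau>lim] in auto)
      then have "(\<lambda>n. f x * (- ((h (x + (- \<tau> n) *\<^sub>R e) - h x) / (- \<tau> n)))) \<longlonglongrightarrow> f x * (- pd i h x)"
        by (intro tendsto_mult tendsto_const tendsto_minus)
      then show "(\<lambda>n. f x * ((h (x + (- \<tau> n) *\<^sub>R e) - h x) / \<tau> n)) \<longlonglongrightarrow> - (f x * pd i h x)"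
        by simp
    qed
    show "AE x in lborel. norm (f x * ((h (x + (- \<tau> n) *\<^sub>R e) - h x) / \<tau> n)) \<le> \<bar>f x\<bar> * Lh" for n
    proof (rule AE_I2)
      fix x
      have "\<bar>h (x + (- \<tau> n) *\<^sub>R e) - h x\<bar> \<le> Lh * \<bar>\<tau> n\<bar>" using Lh(2)[of "x + (- \<tau> n) *\<^sub>R e" x] ne by simp
      then have "\<bar>(h (x + (- \<tau> n) *\<^sub>R e) - h x) / \<tau> n\<bar> \<le> Lh"
        using \<tau>0[of n] by (simp add: abs_divide divide_le_eq)
      then have "\<bar>f x\<bar> * \<bar>(h (x + (- \<tau> n) *\<^sub>R e) - h x) / \<tau> n\<bar> \<le> \<bar>f x\<bar> * Lh"
        by (rule mult_left_mono) simp
      then show "norm (f x * ((h (x + (- \<tau> n) *\<^sub>R e) - h x) / \<tau> n)) \<le> \<bar>f x\<bar> * Lh"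
        by (simp only: real_norm_def abs_mult)
    qed
  qed measurable
  have "integral\<^sup>L lborel (\<lambda>x. pd i f x * h x) = integral\<^sup>L lborel (\<lambda>x. - (f x * pd i h x))"
    using L1 L2 unfolding eq by (rule LIMSEQ_unique)
  then show ?thesis by simp
qed

lemma cont_abs_powr:
  fixes f :: "real ^ 'n::finite \<Rightarrow> real"
  assumes "continuous_on UNIV f" "q > 0"
  shows "continuous_on UNIV (\<lambda>x. \<bar>f x\<bar> powr q)"
proof -
  have "isCont (\<lambda>x. \<bar>f x\<bar> powr q) x" for x
  proof -
    have c: "isCont f x" using assms(1) by (simp add: continuous_on_eq_continuous_at)
    then have "((\<lambda>y. \<bar>f y\<bar>) \<longlongrightarrow> \<bar>f x\<bar>) (at x)"
      by (intro tendsto_rabs) (simp add: isCont_def)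
    then have "((\<lambda>y. \<bar>f y\<bar> powr q) \<longlongrightarrow> \<bar>f x\<bar> powr q) (at x)"
      by (rule tendsto_powr') (use assms(2) in auto)
    then show ?thesis by (simp add: isCont_def)
  qed
  then show ?thesis by (simp add: continuous_at_imp_continuous_on)
qed

lemma eps_trick:
  fixes a e q :: real
  assumes "a \<ge> 0" "e > 0" "q \<ge> 1"
  shows "a \<le> e + e powr (1 - q) * a powr q"
proof (cases "a \<le> e")
  case True then show ?thesis by (simp add: add_increasing2)
next
  case False
  then have "a / e \<ge> 1" using assms by simp
  then have "(a / e) powr 1 \<le> (a / e) powr q" using assms(3) by (intro powr_mono) auto
  then have "a / e \<le> a powr q / e powr q" using assms False by (simp add: powr_divide)
  then have "a \<le> e * (a powr q / e powr q)" using assms by (simp add: field_simps)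
  also have "\<dots> = e powr (1 - q) * a powr q" using assms by (simp add: powr_diff field_simps)
  finally show ?thesis using assms(2) by linarith
qed

lemma test_fun_Lp:
  assumes "test_fun \<eta>" "q > 0"
  shows "integrable lborel (\<lambda>x. \<bar>\<eta> x\<bar> powr q)"
    and "Lp_pow q \<eta> = ennreal (integral\<^sup>L lborel (\<lambda>x. \<bar>\<eta> x\<bar> powr q))"
proof -
  obtain R where R: "\<And>x. R < norm x \<Longrightarrow> \<eta> x = 0" using test_fun_support0[OF assms(1)] by blast
  show i: "integrable lborel (\<lambda>x. \<bar>\<eta> x\<bar> powr q)"
    by (rule cs_integrable[where R=R]) (use R cont_abs_powr[OF test_fun_cont0[OF assms(1)] assms(2)] in auto)
  show "Lp_pow q \<eta> = ennreal (integral\<^sup>L lborel (\<lambda>x. \<bar>\<eta> x\<bar> powr q))"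
    unfolding Lp_pow_def by (rule nn_integral_eq_integral[OF i]) auto
qed

lemma weak_zero:
  assumes \<eta>: "\<And>m. test_fun (\<eta> m)" and g: "test_fun g" and q: "q \<ge> 1"
    and lim: "(\<lambda>m. Lp_pow q (\<eta> m)) \<longlonglongrightarrow> 0"
  shows "(\<lambda>m. integral\<^sup>L lborel (\<lambda>x. \<eta> m x * g x)) \<longlonglongrightarrow> 0"
proof -
  obtain R where R: "\<And>x. R < norm x \<Longrightarrow> g x = 0" using test_fun_support0[OF g] by blast
  obtain M where M: "M \<ge> 0" "\<And>x. \<bar>g x\<bar> \<le> M" using test_fun_bounded[OF g] by blast
  define C where "C = cball (0::real^'a) R"
  define mu where "mu = measure lborel C"
  have Cfin: "emeasure lborel C < \<infinity>" unfolding C_def by (rule emeasure_lborel_cball_finite)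
  have mu: "mu \<ge> 0" unfolding mu_def by simp
  define A where "A m = integral\<^sup>L lborel (\<lambda>x. \<bar>\<eta> m x\<bar> powr q)" for m
  have Ai: "integrable lborel (\<lambda>x. \<bar>\<eta> m x\<bar> powr q)" for m
    using test_fun_Lp(1)[OF \<eta> ] q by simp
  have A0: "A m \<ge> 0" for m unfolding A_def by (intro integral_nonneg_AE) auto
  have "(\<lambda>m. ennreal (A m)) \<longlonglongrightarrow> ennreal 0"
    using lim test_fun_Lp(2)[OF \<eta>] q unfolding A_def by simp
  then have Alim: "A \<longlonglongrightarrow> 0" using A0 by (subst (asm) tendsto_ennreal_iff) auto
  have bound: "\<bar>integral\<^sup>L lborel (\<lambda>x. \<eta> m x * g x)\<bar> \<le> M * e * mu + M * e powr (1 - q) * A m"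
    if e: "e > 0" for e m
  proof -
    have i1: "integrable lborel (\<lambda>x. \<eta> m x * g x)" by (rule test_fun_mult_integrable[OF \<eta> g])
    have i2: "integrable lborel (\<lambda>x. M * e * indicator C x + M * e powr (1 - q) * \<bar>\<eta> m x\<bar> powr q)"
      using Cfin Ai[of m] by (intro Bochner_Integration.integrable_add integrable_mult_right integrable_real_indicator) (auto simp: C_def)
    have "\<bar>integral\<^sup>L lborel (\<lambda>x. \<eta> m x * g x)\<bar> \<le> integral\<^sup>L lborel (\<lambda>x. norm (\<eta> m x * g x))"
      using Bochner_Integration.integral_norm_bound[of lborel "\<lambda>x. \<eta> m x * g x"] by simp
    also have "\<dots> \<le> integral\<^sup>L lborel (\<lambda>x. M * e * indicator C x + M * e powr (1 - q) * \<bar>\<eta> m x\<bar> powr q)"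
    proof (rule integral_mono)
      show "integrable lborel (\<lambda>x. norm (\<eta> m x * g x))" using i1 by auto
      show "integrable lborel (\<lambda>x. M * e * indicator C x + M * e powr (1 - q) * \<bar>\<eta> m x\<bar> powr q)" by (rule i2)
      fix x :: "real^'a"
      show "norm (\<eta> m x * g x) \<le> M * e * indicator C x + M * e powr (1 - q) * \<bar>\<eta> m x\<bar> powr q"
      proof (cases "x \<in> C")
        case True
        have "norm (\<eta> m x * g x) = \<bar>\<eta> m x\<bar> * \<bar>g x\<bar>" by (simp add: abs_mult)
        also have "\<dots> \<le> (e + e powr (1 - q) * \<bar>\<eta> m x\<bar> powr q) * M"
          by (intro mult_mono eps_trick M) (use e q in auto)
        finally show ?thesis using True by (simp add: algebra_simps)
      next
        case False
        then have "g x = 0" using R unfolding C_def by auto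
        then show ?thesis using M(1) e False by (simp add: indicator_def)
      qed
    qed
    also have "\<dots> = M * e * mu + M * e powr (1 - q) * A m"
      using Cfin Ai[of m] unfolding mu_def A_def
      by (subst Bochner_Integration.integral_add) (auto simp: C_def)
    finally show ?thesis .
  qed
  show ?thesis
  proof (rule LIMSEQ_I)
    fix r :: real assume r: "r > 0"
    define e where "e = r / (2 * (M * mu + 1))"
    have e: "e > 0" unfolding e_def using r M mu by (auto intro!: divide_pos_pos add_nonneg_pos)
    have e1: "M * e * mu < r / 2"
    proof -
      have "M * e * mu = r / 2 * (M * mu / (M * mu + 1))" unfolding e_def using M mu by (simp add: field_simps)
      also have "\<dots> < r / 2 * 1"
      proof (intro mult_strict_left_mono)
        have "M * mu \<ge> 0" using M mu by simp
        then show "M * mu / (M * mu + 1) < 1" by (simp add: divide_less_eq)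
      qed (use r in auto)
      finally show ?thesis by simp
    qed
    define K where "K = M * e powr (1 - q) + 1"
    have K: "K > 0" unfolding K_def using M by (simp add: add_nonneg_pos)
    obtain no where no: "\<And>m. m \<ge> no \<Longrightarrow> \<bar>A m\<bar> < r / (2 * K)"
      using LIMSEQ_D[OF Alim, of "r / (2 * K)"] r K by auto
    show "\<exists>no. \<forall>m\<ge>no. norm (integral\<^sup>L lborel (\<lambda>x. \<eta> m x * g x) - 0) < r"
    proof (intro exI allI impI)
      fix m assume "m \<ge> no"
      then have Am: "A m < r / (2 * K)" using no by force
      have "M * e powr (1 - q) * A m \<le> K * A m" unfolding K_def using A0[of m] by (intro mult_right_mono) auto
      also have "\<dots> < K * (r / (2 * K))" using Am K by (intro mult_strict_left_mono) auto
      also have "\<dots> = r / 2" using K by simp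
      finally have "M * e powr (1 - q) * A m < r / 2" .
      then show "norm (integral\<^sup>L lborel (\<lambda>x. \<eta> m x * g x) - 0) < r"
        using bound[OF e, of m] e1 by simp
    qed
  qed
qed

lemma closable:
  assumes \<eta>: "\<And>k. test_fun (\<eta> k)" and q: "q \<ge> 1"
    and cauchy: "\<And>e. e > 0 \<Longrightarrow> \<exists>K. \<forall>k\<ge>K. \<forall>m\<ge>K. D12sq_test (\<lambda>x. \<eta> k x - \<eta> m x) < e"
    and lim: "(\<lambda>m. Lp_pow q (\<eta> m)) \<longlonglongrightarrow> 0"
  shows "(\<lambda>k. D12sq_test (\<eta> k)) \<longlonglongrightarrow> 0"
proof -
  have Blim: "(\<lambda>m. Bf (\<eta> k) (\<eta> m)) \<longlonglongrightarrow> 0" for k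
  proof -
    have "Bf (\<eta> k) (\<eta> m) = (\<Sum>i\<in>UNIV. - integral\<^sup>L lborel (\<lambda>x. \<eta> m x * pd i (pd i (\<eta> k)) x))" for m
      unfolding Bf_def
    proof (intro sum.cong refl)
      fix i
      have "integral\<^sup>L lborel (\<lambda>x. pd i (\<eta> k) x * pd i (\<eta> m) x) = integral\<^sup>L lborel (\<lambda>x. pd i (\<eta> m) x * pd i (\<eta> k) x)"
        by (simp add: mult.commute)
      also have "\<dots> = - integral\<^sup>L lborel (\<lambda>x. \<eta> m x * pd i (pd i (\<eta> k)) x)"
        by (rule IBP[OF \<eta> test_fun_pd[OF \<eta>]])
      finally show "integral\<^sup>L lborel (\<lambda>x. pd i (\<eta> k) x * pd i (\<eta> m) x) = - integral\<^sup>L lborel (\<lambda>x. \<eta> m x * pd i (pd i (\<eta> k)) x)" .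
    qed
    moreover have "(\<lambda>m. \<Sum>i\<in>UNIV. - integral\<^sup>L lborel (\<lambda>x. \<eta> m x * pd i (pd i (\<eta> k)) x)) \<longlonglongrightarrow> (\<Sum>i\<in>(UNIV::'a set). - 0)"
      by (intro tendsto_sum tendsto_minus weak_zero[OF \<eta> _ q lim] test_fun_pd \<eta>)
    ultimately show ?thesis by simp
  qed
  show ?thesis
  proof (rule LIMSEQ_I)
    fix r :: real assume r: "r > 0"
    obtain K where K: "\<And>k m. k \<ge> K \<Longrightarrow> m \<ge> K \<Longrightarrow> D12sq_test (\<lambda>x. \<eta> k x - \<eta> m x) < r / 2"
      using cauchy[of "r/2"] r by auto
    show "\<exists>no. \<forall>k\<ge>no. norm (D12sq_test (\<eta> k) - 0) < r"
    proof (intro exI allI impI)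
      fix k assume k: "k \<ge> K"
      have le: "D12sq_test (\<eta> k) \<le> r / 2 + 2 * Bf (\<eta> k) (\<eta> m)" if m: "m \<ge> K" for m
      proof -
        have "D12sq_test (\<lambda>x. \<eta> k x - \<eta> m x) = D12sq_test (\<eta> k) - 2 * Bf (\<eta> k) (\<eta> m) + D12sq_test (\<eta> m)"
          using Q_lin[OF \<eta>[of k] \<eta>[of m], of 1 "-1"] by simp
        then show ?thesis using K[OF k m] Q_nonneg[OF \<eta>, of m] by linarith
      qed
      have "(\<lambda>m. r / 2 + 2 * Bf (\<eta> k) (\<eta> m)) \<longlonglongrightarrow> r / 2 + 2 * 0"
        by (intro tendsto_add tendsto_mult tendsto_const Blim)
      then have "D12sq_test (\<eta> k) \<le> r / 2"
        using LIMSEQ_le_const[of _ "r / 2 + 2 * 0" "D12sq_test (\<eta> k)"] le by auto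
      then show "norm (D12sq_test (\<eta> k) - 0) < r" using Q_nonneg[OF \<eta>, of k] r by simp
    qed
  qed
qed

lemma approx_seqD:
  fixes \<phi> :: "nat \<Rightarrow> real ^ 'n::finite \<Rightarrow> real"
  assumes "approx_seq s w \<phi>"
  shows "\<And>k. test_fun (\<phi> k)"
    and "\<And>e. e > 0 \<Longrightarrow> \<exists>K. \<forall>k\<ge>K. \<forall>m\<ge>K. D12sq_test (\<lambda>x. \<phi> k x - \<phi> m x) < e"
    and "(\<lambda>k. Lp_pow (critS CARD('n)) (\<lambda>x. \<phi> k x - w x)) \<longlonglongrightarrow> 0"
proof -
  show "\<And>k. test_fun (\<phi> k)" using assms unfolding approx_seq_def by auto
  show "(\<lambda>k. Lp_pow (critS CARD('n)) (\<lambda>x. \<phi> k x - w x)) \<longlonglongrightarrow> 0" using assms unfolding approx_seq_def by auto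
  fix e :: real assume e: "e > 0"
  have "\<forall>e>0. \<exists>K. \<forall>k\<ge>K. \<forall>m\<ge>K. D12sq_test (\<lambda>x. \<phi> k x - \<phi> m x) + Gag s (\<lambda>x. \<phi> k x - \<phi> m x) < e"
    using assms unfolding approx_seq_def by (elim conjE)
  then obtain K where K: "\<forall>k\<ge>K. \<forall>m\<ge>K. D12sq_test (\<lambda>x. \<phi> k x - \<phi> m x) + Gag s (\<lambda>x. \<phi> k x - \<phi> m x) < e"
    using e by blast
  have G: "Gag s f \<ge> 0" for f :: "real^'n \<Rightarrow> real" unfolding Gag_def by simp
  show "\<exists>K. \<forall>k\<ge>K. \<forall>m\<ge>K. D12sq_test (\<lambda>x. \<phi> k x - \<phi> m x) < e"
  proof (intro exI allI impI)
    fix k m assume "k \<ge> K" "m \<ge> K"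
    then have "D12sq_test (\<lambda>x. \<phi> k x - \<phi> m x) + Gag s (\<lambda>x. \<phi> k x - \<phi> m x) < e" using K by blast
    then show "D12sq_test (\<lambda>x. \<phi> k x - \<phi> m x) < e" using G[of "\<lambda>x. \<phi> k x - \<phi> m x"] by linarith
  qed
qed

lemma approx_conv:
  assumes "approx_seq s w \<phi>"
  shows "(\<lambda>k. nQ (\<phi> k)) \<longlonglongrightarrow> lim (\<lambda>k. nQ (\<phi> k))"
proof -
  note t = approx_seqD(1)[OF assms]
  have "Cauchy (\<lambda>k. nQ (\<phi> k))"
  proof (rule CauchyI)
    fix e :: real assume e: "e > 0"
    obtain K where K: "\<And>k m. k \<ge> K \<Longrightarrow> m \<ge> K \<Longrightarrow> D12sq_test (\<lambda>x. \<phi> k x - \<phi> m x) < e^2"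
      using approx_seqD(2)[OF assms, of "e^2"] e by auto
    show "\<exists>M. \<forall>m\<ge>M. \<forall>n\<ge>M. norm (nQ (\<phi> m) - nQ (\<phi> n)) < e"
    proof (intro exI allI impI)
      fix m n assume "m \<ge> K" "n \<ge> K"
      have "\<bar>nQ (\<phi> m) - nQ (\<phi> n)\<bar> \<le> nQ (\<lambda>x. \<phi> m x - \<phi> n x)" by (rule nQ_diff_le[OF t t])
      also have "\<dots> < sqrt (e^2)" unfolding nQ_def using K[OF \<open>m \<ge> K\<close> \<open>n \<ge> K\<close>] by (rule real_sqrt_less_mono)
      finally show "norm (nQ (\<phi> m) - nQ (\<phi> n)) < e" using e by simp
    qed
  qed
  then show ?thesis by (simp add: Cauchy_convergent_iff convergent_LIMSEQ_iff)
qed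

lemma D_from_nQ:
  assumes "\<And>k. test_fun (\<phi> k)" "(\<lambda>k. nQ (\<phi> k)) \<longlonglongrightarrow> L"
  shows "(\<lambda>k. D12sq_test (\<phi> k)) \<longlonglongrightarrow> L^2"
proof -
  have "(\<lambda>k. (nQ (\<phi> k))^2) \<longlonglongrightarrow> L^2" by (intro tendsto_intros assms(2))
  moreover have "(nQ (\<phi> k))^2 = D12sq_test (\<phi> k)" for k
    using Q_nonneg[OF assms(1)] by (simp add: nQ_def)
  ultimately show ?thesis by simp
qed

lemma powr_sum_le:
  fixes u v q :: real
  assumes "q \<ge> 0"
  shows "\<bar>u + v\<bar> powr q \<le> 2 powr q * (\<bar>u\<bar> powr q + \<bar>v\<bar> powr q)"
proof -
  have "\<bar>u + v\<bar> \<le> 2 * max \<bar>u\<bar> \<bar>v\<bar>" by simp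
  then have "\<bar>u + v\<bar> powr q \<le> (2 * max \<bar>u\<bar> \<bar>v\<bar>) powr q" using assms by (intro powr_mono2) auto
  also have "\<dots> = 2 powr q * (max \<bar>u\<bar> \<bar>v\<bar>) powr q" by (simp add: powr_mult)
  also have "(max \<bar>u\<bar> \<bar>v\<bar>) powr q \<le> \<bar>u\<bar> powr q + \<bar>v\<bar> powr q"
    by (cases "\<bar>u\<bar> \<le> \<bar>v\<bar>") (auto simp: max_def)
  finally show ?thesis by (simp add: mult_left_mono)
qed

lemma Q_diff_le:
  assumes "test_fun f" "test_fun g"
  shows "D12sq_test (\<lambda>x. a * f x + b * g x) \<le> 2 * a^2 * D12sq_test f + 2 * b^2 * D12sq_test g"
proof -
  have "nQ (\<lambda>x. a * f x + b * g x) \<le> \<bar>a\<bar> * nQ f + \<bar>b\<bar> * nQ g" by (rule nQ_lin[OF assms])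
  then have "(nQ (\<lambda>x. a * f x + b * g x))^2 \<le> (\<bar>a\<bar> * nQ f + \<bar>b\<bar> * nQ g)^2"
    using nQ_nonneg by (intro power_mono) auto
  also have "\<dots> \<le> 2 * (\<bar>a\<bar> * nQ f)^2 + 2 * (\<bar>b\<bar> * nQ g)^2"
  proof -
    have "(x + y)^2 + (x - y)^2 = 2 * x^2 + 2 * y^2" for x y :: real by (simp add: power2_sum power2_diff)
    moreover have "(x - y)^2 \<ge> 0" for x y :: real by simp
    ultimately have "(x + y)^2 \<le> 2 * x^2 + 2 * y^2" for x y :: real by (metis le_add_same_cancel1)
    then show ?thesis .
  qed
  also have "\<dots> = 2 * a^2 * D12sq_test f + 2 * b^2 * D12sq_test g"
    using Q_nonneg[OF assms(1)] Q_nonneg[OF assms(2)] by (simp add: nQ_def power_mult_distrib)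
  finally show ?thesis
    using Q_nonneg[OF test_fun_lin[OF assms, of a b]] by (simp add: nQ_def)
qed

lemma Gag_enn_cmult:
  fixes f :: "real ^ 'n::finite \<Rightarrow> real"
  assumes [measurable]: "f \<in> borel_measurable lborel"
  shows "Gag_enn s (\<lambda>x. c * f x) = ennreal (c^2) * Gag_enn s f"
proof -
  have e: "ennreal ((c * f x - c * f y)^2 / norm (x - y) powr (real CARD('n) + 2 * s)) =
        ennreal (c^2) * ennreal ((f x - f y)^2 / norm (x - y) powr (real CARD('n) + 2 * s))" for x y
  proof -
    have h1: "(c * f x - c * f y)^2 = c^2 * (f x - f y)^2" by (simp add: power2_eq_square algebra_simps)
    have eqA: "(c * f x - c * f y)^2 / norm (x - y) powr (real CARD('n) + 2 * s) =
          c^2 * ((f x - f y)^2 / norm (x - y) powr (real CARD('n) + 2 * s))"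
      unfolding h1 by simp
    have nn: "0 \<le> (f x - f y)^2 / norm (x - y) powr (real CARD('n) + 2 * s)" by simp
    show ?thesis unfolding eqA by (rule ennreal_mult[OF zero_le_power2 nn])
  qed
  have "(\<integral>\<^sup>+ y. ennreal (c^2) * ennreal ((f x - f y)^2 / norm (x - y) powr (real CARD('n) + 2 * s)) \<partial>lborel)
     = ennreal (c^2) * (\<integral>\<^sup>+ y. ennreal ((f x - f y)^2 / norm (x - y) powr (real CARD('n) + 2 * s)) \<partial>lborel)" for x
    by (rule nn_integral_cmult) measurable
  then have "Gag_enn s (\<lambda>x. c * f x) = (\<integral>\<^sup>+ x. ennreal (c^2) * (\<integral>\<^sup>+ y. ennreal ((f x - f y)^2 / norm (x - y) powr (real CARD('n) + 2 * s)) \<partial>lborel) \<partial>lborel)"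
    unfolding Gag_enn_def e by simp
  also have "\<dots> = ennreal (c^2) * Gag_enn s f"
    unfolding Gag_enn_def by (rule nn_integral_cmult) measurable
  finally show ?thesis .
qed

lemma Gag_cmult:
  fixes f :: "real ^ 'n::finite \<Rightarrow> real"
  assumes "f \<in> borel_measurable lborel"
  shows "Gag s (\<lambda>x. c * f x) = c^2 * Gag s f"
  unfolding Gag_def Gag_enn_cmult[OF assms] by (simp add: enn2real_mult)

lemma Lp_cmult:
  fixes a b :: "real ^ 'n::finite \<Rightarrow> real"
  assumes [measurable]: "a \<in> borel_measurable lborel" "b \<in> borel_measurable lborel"
  shows "Lp_pow q (\<lambda>x. c * a x - c * b x) = ennreal (\<bar>c\<bar> powr q) * Lp_pow q (\<lambda>x. a x - b x)"
proof -
  have e: "ennreal (\<bar>c * a x - c * b x\<bar> powr q) = ennreal (\<bar>c\<bar> powr q) * ennreal (\<bar>a x - b x\<bar> powr q)" for x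
  proof -
    have "\<bar>c * a x - c * b x\<bar> powr q = \<bar>c\<bar> powr q * \<bar>a x - b x\<bar> powr q"
      by (simp add: right_diff_distrib[symmetric] abs_mult powr_mult)
    then show ?thesis by (simp add: ennreal_mult)
  qed
  show ?thesis unfolding Lp_pow_def e by (rule nn_integral_cmult) measurable
qed

lemma approx_seq_scale:
  fixes w :: "real ^ 'n::finite \<Rightarrow> real"
  assumes ap: "approx_seq s w \<phi>" and [measurable]: "w \<in> borel_measurable lborel"
  shows "approx_seq s (\<lambda>x. c * w x) (\<lambda>k x. c * \<phi> k x)"
proof -
  note t = approx_seqD(1)[OF ap]
  have [measurable]: "\<phi> k \<in> borel_measurable lborel" for k using test_fun_measurable[OF t] by simp
  have C: "\<forall>e>0. \<exists>K. \<forall>k\<ge>K. \<forall>m\<ge>K. D12sq_test (\<lambda>x. \<phi> k x - \<phi> m x) + Gag s (\<lambda>x. \<phi> k x - \<phi> m x) < e"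
    using ap unfolding approx_seq_def by (elim conjE)
  have L: "(\<lambda>k. Lp_pow (critS CARD('n)) (\<lambda>x. \<phi> k x - w x)) \<longlonglongrightarrow> 0"
    using ap unfolding approx_seq_def by (elim conjE)
  have eqf: "(\<lambda>x. c * \<phi> k x - c * \<phi> m x) = (\<lambda>x. c * (\<phi> k x - \<phi> m x))" for k m
    by (simp add: fun_eq_iff right_diff_distrib)
  have G0: "Gag s f \<ge> 0" for f :: "real^'n \<Rightarrow> real" unfolding Gag_def by simp
  show ?thesis
    unfolding approx_seq_def
  proof (intro conjI)
    show "\<forall>k. test_fun (\<lambda>x. c * \<phi> k x)" using test_fun_cmult[OF t] by blast
    show "\<forall>e>0. \<exists>K. \<forall>k\<ge>K. \<forall>m\<ge>K. D12sq_test (\<lambda>x. c * \<phi> k x - c * \<phi> m x) + Gag s (\<lambda>x. c * \<phi> k x - c * \<phi> m x) < e"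
    proof (intro allI impI)
      fix e :: real assume e: "e > 0"
      have cp: "c^2 + 1 > 0" by (simp add: add_nonneg_pos)
      obtain K where K: "\<forall>k\<ge>K. \<forall>m\<ge>K. D12sq_test (\<lambda>x. \<phi> k x - \<phi> m x) + Gag s (\<lambda>x. \<phi> k x - \<phi> m x) < e / (c^2 + 1)"
        using C[rule_format, of "e / (c^2 + 1)"] e cp by auto
      show "\<exists>K. \<forall>k\<ge>K. \<forall>m\<ge>K. D12sq_test (\<lambda>x. c * \<phi> k x - c * \<phi> m x) + Gag s (\<lambda>x. c * \<phi> k x - c * \<phi> m x) < e"
      proof (intro exI allI impI)
        fix k m assume km: "k \<ge> K" "m \<ge> K"
        have X: "D12sq_test (\<lambda>x. \<phi> k x - \<phi> m x) + Gag s (\<lambda>x. \<phi> k x - \<phi> m x) < e / (c^2 + 1)"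
          using K km by blast
        have nn: "D12sq_test (\<lambda>x. \<phi> k x - \<phi> m x) + Gag s (\<lambda>x. \<phi> k x - \<phi> m x) \<ge> 0"
          using Q_nonneg[OF test_fun_diff[OF t t]] G0 by (simp add: add_nonneg_nonneg)
        have "D12sq_test (\<lambda>x. c * \<phi> k x - c * \<phi> m x) + Gag s (\<lambda>x. c * \<phi> k x - c * \<phi> m x)
            = c^2 * (D12sq_test (\<lambda>x. \<phi> k x - \<phi> m x) + Gag s (\<lambda>x. \<phi> k x - \<phi> m x))"
          unfolding eqf Q_cmult[OF test_fun_diff[OF t t]]
          by (subst Gag_cmult) (measurable, simp add: algebra_simps)
        also have "\<dots> \<le> (c^2 + 1) * (D12sq_test (\<lambda>x. \<phi> k x - \<phi> m x) + Gag s (\<lambda>x. \<phi> k x - \<phi> m x))"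
          using nn by (intro mult_right_mono) auto
        also have "\<dots> < (c^2 + 1) * (e / (c^2 + 1))"
          using X cp by (intro mult_strict_left_mono) auto
        also have "\<dots> = e" using cp by simp
        finally show "D12sq_test (\<lambda>x. c * \<phi> k x - c * \<phi> m x) + Gag s (\<lambda>x. c * \<phi> k x - c * \<phi> m x) < e" .
      qed
    qed
    have "(\<lambda>k. ennreal (\<bar>c\<bar> powr critS CARD('n)) * Lp_pow (critS CARD('n)) (\<lambda>x. \<phi> k x - w x)) \<longlonglongrightarrow> ennreal (\<bar>c\<bar> powr critS CARD('n)) * 0"
      by (rule ennreal_tendsto_cmult[OF _ L]) simp
    moreover have "Lp_pow (critS CARD('n)) (\<lambda>x. c * \<phi> k x - c * w x) = ennreal (\<bar>c\<bar> powr critS CARD('n)) * Lp_pow (critS CARD('n)) (\<lambda>x. \<phi> k x - w x)" for k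
      by (rule Lp_cmult) measurable
    ultimately show "(\<lambda>k. Lp_pow (critS CARD('n)) (\<lambda>x. c * \<phi> k x - c * w x)) \<longlonglongrightarrow> 0"
      by simp
  qed
qed

lemma Lp_lim_comb:
  fixes w :: "real ^ 'n::finite \<Rightarrow> real"
  assumes [measurable]: "w \<in> borel_measurable lborel"
    and \<phi>m[measurable]: "\<And>k. \<phi> k \<in> borel_measurable lborel" and \<psi>m[measurable]: "\<And>k. \<psi> k \<in> borel_measurable lborel"
    and q: "q \<ge> 0"
    and L1: "(\<lambda>k. Lp_pow q (\<lambda>x. \<psi> k x - c * w x)) \<longlonglongrightarrow> 0"
    and L2: "(\<lambda>k. Lp_pow q (\<lambda>x. \<phi> k x - w x)) \<longlonglongrightarrow> 0"
  shows "(\<lambda>k. Lp_pow q (\<lambda>x. \<psi> k x - c * \<phi> k x)) \<longlonglongrightarrow> 0"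
proof -
  define B where "B k = ennreal (2 powr q) * (Lp_pow q (\<lambda>x. \<psi> k x - c * w x) + ennreal (\<bar>c\<bar> powr q) * Lp_pow q (\<lambda>x. \<phi> k x - w x))" for k
  have le: "Lp_pow q (\<lambda>x. \<psi> k x - c * \<phi> k x) \<le> B k" for k
  proof -
    have pt: "ennreal (\<bar>\<psi> k x - c * \<phi> k x\<bar> powr q) \<le>
       ennreal (2 powr q) * (ennreal (\<bar>\<psi> k x - c * w x\<bar> powr q) + ennreal (\<bar>c\<bar> powr q) * ennreal (\<bar>\<phi> k x - w x\<bar> powr q))" for x
    proof -
      have "\<bar>\<psi> k x - c * \<phi> k x\<bar> powr q = \<bar>(\<psi> k x - c * w x) + (- c) * (\<phi> k x - w x)\<bar> powr q"
        by (simp add: algebra_simps)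
      also have "\<dots> \<le> 2 powr q * (\<bar>\<psi> k x - c * w x\<bar> powr q + \<bar>(- c) * (\<phi> k x - w x)\<bar> powr q)"
        by (rule powr_sum_le[OF q])
      also have "\<dots> = 2 powr q * (\<bar>\<psi> k x - c * w x\<bar> powr q + \<bar>c\<bar> powr q * \<bar>\<phi> k x - w x\<bar> powr q)"
        by (simp add: abs_mult powr_mult)
      finally have "ennreal (\<bar>\<psi> k x - c * \<phi> k x\<bar> powr q) \<le> ennreal (2 powr q * (\<bar>\<psi> k x - c * w x\<bar> powr q + \<bar>c\<bar> powr q * \<bar>\<phi> k x - w x\<bar> powr q))"
        by (rule ennreal_leI)
      also have "\<dots> = ennreal (2 powr q) * (ennreal (\<bar>\<psi> k x - c * w x\<bar> powr q) + ennreal (\<bar>c\<bar> powr q) * ennreal (\<bar>\<phi> k x - w x\<bar> powr q))"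
      proof -
        have "ennreal (2 powr q * (\<bar>\<psi> k x - c * w x\<bar> powr q + \<bar>c\<bar> powr q * \<bar>\<phi> k x - w x\<bar> powr q)) =
              ennreal (2 powr q) * ennreal (\<bar>\<psi> k x - c * w x\<bar> powr q + \<bar>c\<bar> powr q * \<bar>\<phi> k x - w x\<bar> powr q)"
          by (rule ennreal_mult) auto
        also have "ennreal (\<bar>\<psi> k x - c * w x\<bar> powr q + \<bar>c\<bar> powr q * \<bar>\<phi> k x - w x\<bar> powr q) =
              ennreal (\<bar>\<psi> k x - c * w x\<bar> powr q) + ennreal (\<bar>c\<bar> powr q * \<bar>\<phi> k x - w x\<bar> powr q)"
          by (rule ennreal_plus) auto
        also have "ennreal (\<bar>c\<bar> powr q * \<bar>\<phi> k x - w x\<bar> powr q) = ennreal (\<bar>c\<bar> powr q) * ennreal (\<bar>\<phi> k x - w x\<bar> powr q)"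
          by (rule ennreal_mult) auto
        finally show ?thesis .
      qed
      finally show ?thesis .
    qed
    have "Lp_pow q (\<lambda>x. \<psi> k x - c * \<phi> k x) \<le> (\<integral>\<^sup>+ x. ennreal (2 powr q) * (ennreal (\<bar>\<psi> k x - c * w x\<bar> powr q) + ennreal (\<bar>c\<bar> powr q) * ennreal (\<bar>\<phi> k x - w x\<bar> powr q)) \<partial>lborel)"
      unfolding Lp_pow_def by (rule nn_integral_mono) (rule pt)
    also have "\<dots> = ennreal (2 powr q) * (\<integral>\<^sup>+ x. (ennreal (\<bar>\<psi> k x - c * w x\<bar> powr q) + ennreal (\<bar>c\<bar> powr q) * ennreal (\<bar>\<phi> k x - w x\<bar> powr q)) \<partial>lborel)"
      by (rule nn_integral_cmult) measurable
    also have "(\<integral>\<^sup>+ x. (ennreal (\<bar>\<psi> k x - c * w x\<bar> powr q) + ennreal (\<bar>c\<bar> powr q) * ennreal (\<bar>\<phi> k x - w x\<bar> powr q)) \<partial>lborel)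
       = (\<integral>\<^sup>+ x. ennreal (\<bar>\<psi> k x - c * w x\<bar> powr q) \<partial>lborel) + (\<integral>\<^sup>+ x. ennreal (\<bar>c\<bar> powr q) * ennreal (\<bar>\<phi> k x - w x\<bar> powr q) \<partial>lborel)"
      by (rule nn_integral_add) measurable
    also have "(\<integral>\<^sup>+ x. ennreal (\<bar>c\<bar> powr q) * ennreal (\<bar>\<phi> k x - w x\<bar> powr q) \<partial>lborel) = ennreal (\<bar>c\<bar> powr q) * (\<integral>\<^sup>+ x. ennreal (\<bar>\<phi> k x - w x\<bar> powr q) \<partial>lborel)"
      by (rule nn_integral_cmult) measurable
    also have "ennreal (2 powr q) * ((\<integral>\<^sup>+ x. ennreal (\<bar>\<psi> k x - c * w x\<bar> powr q) \<partial>lborel) + ennreal (\<bar>c\<bar> powr q) * (\<integral>\<^sup>+ x. ennreal (\<bar>\<phi> k x - w x\<bar> powr q) \<partial>lborel)) = B k"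
      unfolding B_def Lp_pow_def ..
    finally show ?thesis .
  qed
  have "B \<longlonglongrightarrow> ennreal (2 powr q) * (0 + ennreal (\<bar>c\<bar> powr q) * 0)"
    unfolding B_def by (intro ennreal_tendsto_cmult tendsto_add L1 L2) auto
  then have "B \<longlonglongrightarrow> 0" by simp
  then show ?thesis
    by (rule tendsto_sandwich[rotated 2, OF tendsto_const]) (auto simp: le)
qed

lemma scale_lim:
  fixes w :: "real ^ 'n::finite \<Rightarrow> real"
  assumes ap\<phi>: "approx_seq s w \<phi>" and ap\<psi>: "approx_seq s (\<lambda>x. c * w x) \<psi>"
    and [measurable]: "w \<in> borel_measurable lborel" and q: "critS CARD('n) \<ge> 1"
  shows "lim (\<lambda>k. D12sq_test (\<psi> k)) = c^2 * lim (\<lambda>k. D12sq_test (\<phi> k))"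
proof -
  note t\<phi> = approx_seqD(1)[OF ap\<phi>] and t\<psi> = approx_seqD(1)[OF ap\<psi>]
  have [measurable]: "\<phi> k \<in> borel_measurable lborel" "\<psi> k \<in> borel_measurable lborel" for k
    using test_fun_measurable[OF t\<phi>] test_fun_measurable[OF t\<psi>] by auto
  define \<eta> where "\<eta> k x = \<psi> k x - c * \<phi> k x" for k x
  have t\<eta>: "test_fun (\<eta> k)" for k
    using test_fun_lin[OF t\<psi>[of k] t\<phi>[of k], of 1 "-c"] unfolding \<eta>_def by (simp add: fun_eq_iff)
  have cauchy: "\<exists>K. \<forall>k\<ge>K. \<forall>m\<ge>K. D12sq_test (\<lambda>x. \<eta> k x - \<eta> m x) < e" if e: "e > 0" for e
  proof -
    have cp: "4 * (c^2 + 1) > 0" by (simp add: add_nonneg_pos)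
    obtain K1 where K1: "\<forall>k\<ge>K1. \<forall>m\<ge>K1. D12sq_test (\<lambda>x. \<psi> k x - \<psi> m x) < e / 4"
      using approx_seqD(2)[OF ap\<psi>, of "e/4"] e by auto
    obtain K2 where K2: "\<forall>k\<ge>K2. \<forall>m\<ge>K2. D12sq_test (\<lambda>x. \<phi> k x - \<phi> m x) < e / (4 * (c^2 + 1))"
      using approx_seqD(2)[OF ap\<phi>, of "e / (4 * (c^2 + 1))"] e cp by auto
    show ?thesis
    proof (intro exI[of _ "max K1 K2"] allI impI)
      fix k m assume km: "max K1 K2 \<le> k" "max K1 K2 \<le> m"
      have eqf: "(\<lambda>x. \<eta> k x - \<eta> m x) = (\<lambda>x. 1 * (\<psi> k x - \<psi> m x) + (- c) * (\<phi> k x - \<phi> m x))"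
        unfolding \<eta>_def by (simp add: fun_eq_iff algebra_simps)
      have "D12sq_test (\<lambda>x. \<eta> k x - \<eta> m x) \<le> 2 * 1^2 * D12sq_test (\<lambda>x. \<psi> k x - \<psi> m x) + 2 * (-c)^2 * D12sq_test (\<lambda>x. \<phi> k x - \<phi> m x)"
        unfolding eqf by (rule Q_diff_le[OF test_fun_diff[OF t\<psi> t\<psi>] test_fun_diff[OF t\<phi> t\<phi>]])
      also have "\<dots> < e"
      proof -
        have a: "D12sq_test (\<lambda>x. \<psi> k x - \<psi> m x) < e / 4" using K1 km by auto
        have b: "D12sq_test (\<lambda>x. \<phi> k x - \<phi> m x) < e / (4 * (c^2 + 1))" using K2 km by auto
        have b0: "D12sq_test (\<lambda>x. \<phi> k x - \<phi> m x) \<ge> 0" by (rule Q_nonneg[OF test_fun_diff[OF t\<phi> t\<phi>]])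
        have "c^2 * D12sq_test (\<lambda>x. \<phi> k x - \<phi> m x) \<le> (c^2 + 1) * D12sq_test (\<lambda>x. \<phi> k x - \<phi> m x)"
          using b0 by (intro mult_right_mono) auto
        also have "\<dots> < (c^2 + 1) * (e / (4 * (c^2 + 1)))"
          using b by (intro mult_strict_left_mono) (auto simp: add_nonneg_pos)
        also have "\<dots> = e / 4"
        proof -
          have gen: "a \<noteq> 0 \<Longrightarrow> a * (e / (4 * a)) = e / 4" for a :: real by simp
          have "c^2 + 1 \<noteq> 0" using zero_le_power2[of c] by linarith
          then show ?thesis by (rule gen)
        qed
        finally have bb: "c^2 * D12sq_test (\<lambda>x. \<phi> k x - \<phi> m x) < e / 4" .
        have "(-c)^2 = c^2" by simp
        then show ?thesis using a bb by simp
      qed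
      finally show "D12sq_test (\<lambda>x. \<eta> k x - \<eta> m x) < e" .
    qed
  qed
  have Lq: "(\<lambda>k. Lp_pow (critS CARD('n)) (\<eta> k)) \<longlonglongrightarrow> 0"
    unfolding \<eta>_def
    by (rule Lp_lim_comb[OF _ _ _ _ approx_seqD(3)[OF ap\<psi>] approx_seqD(3)[OF ap\<phi>]]) (use q in auto)
  have Q\<eta>: "(\<lambda>k. D12sq_test (\<eta> k)) \<longlonglongrightarrow> 0"
    by (rule closable[OF t\<eta> q cauchy Lq])
  have n\<eta>: "(\<lambda>k. nQ (\<eta> k)) \<longlonglongrightarrow> 0"
    unfolding nQ_def using tendsto_real_sqrt[OF Q\<eta>] by simp
  define L\<phi> where "L\<phi> = lim (\<lambda>k. nQ (\<phi> k))"
  define L\<psi> where "L\<psi> = lim (\<lambda>k. nQ (\<psi> k))"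
  have l\<phi>: "(\<lambda>k. nQ (\<phi> k)) \<longlonglongrightarrow> L\<phi>" unfolding L\<phi>_def by (rule approx_conv[OF ap\<phi>])
  have l\<psi>: "(\<lambda>k. nQ (\<psi> k)) \<longlonglongrightarrow> L\<psi>" unfolding L\<psi>_def by (rule approx_conv[OF ap\<psi>])
  have A: "(\<lambda>k. nQ (\<psi> k) - \<bar>c\<bar> * nQ (\<phi> k)) \<longlonglongrightarrow> 0"
  proof (rule Lim_null_comparison[OF _ n\<eta>])
    show "\<forall>\<^sub>F k in sequentially. norm (nQ (\<psi> k) - \<bar>c\<bar> * nQ (\<phi> k)) \<le> nQ (\<eta> k)"
    proof (rule always_eventually, rule allI)
      fix k
      have "\<bar>nQ (\<psi> k) - nQ (\<lambda>x. c * \<phi> k x)\<bar> \<le> nQ (\<lambda>x. \<psi> k x - c * \<phi> k x)"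
        by (rule nQ_diff_le[OF t\<psi> test_fun_cmult[OF t\<phi>]])
      then show "norm (nQ (\<psi> k) - \<bar>c\<bar> * nQ (\<phi> k)) \<le> nQ (\<eta> k)"
        unfolding nQ_cmult[OF t\<phi>] \<eta>_def by (simp add: fun_eq_iff)
    qed
  qed
  have B: "(\<lambda>k. nQ (\<psi> k) - \<bar>c\<bar> * nQ (\<phi> k)) \<longlonglongrightarrow> L\<psi> - \<bar>c\<bar> * L\<phi>"
    by (intro tendsto_intros l\<phi> l\<psi>)
  have "L\<psi> - \<bar>c\<bar> * L\<phi> = 0" using LIMSEQ_unique[OF B A] .
  then have LL: "L\<psi> = \<bar>c\<bar> * L\<phi>" by simp
  have "lim (\<lambda>k. D12sq_test (\<psi> k)) = L\<psi>^2" by (rule limI[OF D_from_nQ[OF t\<psi> l\<psi>]])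
  moreover have "lim (\<lambda>k. D12sq_test (\<phi> k)) = L\<phi>^2" by (rule limI[OF D_from_nQ[OF t\<phi> l\<phi>]])
  ultimately show ?thesis using LL by (simp add: power_mult_distrib)
qed

lemma D12sq_scale:
  fixes w :: "real ^ 'n::finite \<Rightarrow> real"
  assumes "w \<in> Espace s" and q: "critS CARD('n) \<ge> 1"
  shows "D12sq s (\<lambda>x. c * w x) = c^2 * D12sq s w"
proof -
  have wm: "w \<in> borel_measurable lborel" and ex: "\<exists>\<phi>. approx_seq s w \<phi>" using assms unfolding Espace_def by auto
  define \<phi> where "\<phi> = (SOME \<phi>. approx_seq s w \<phi>)"
  have ap\<phi>: "approx_seq s w \<phi>" unfolding \<phi>_def using ex by (rule someI_ex)
  have ex2: "\<exists>\<psi>. approx_seq s (\<lambda>x. c * w x) \<psi>" using approx_seq_scale[OF ap\<phi> wm] by blast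
  define \<psi> where "\<psi> = (SOME \<psi>. approx_seq s (\<lambda>x. c * w x) \<psi>)"
  have ap\<psi>: "approx_seq s (\<lambda>x. c * w x) \<psi>" unfolding \<psi>_def using ex2 by (rule someI_ex)
  show ?thesis
    unfolding D12sq_def \<phi>_def[symmetric] \<psi>_def[symmetric]
    by (rule scale_lim[OF ap\<phi> ap\<psi> wm q])
qed

lemma D12sq_nonneg:
  fixes w :: "real ^ 'n::finite \<Rightarrow> real"
  assumes "w \<in> Espace s"
  shows "D12sq s w \<ge> 0"
proof -
  have ex: "\<exists>\<phi>. approx_seq s w \<phi>" using assms unfolding Espace_def by auto
  define \<phi> where "\<phi> = (SOME \<phi>. approx_seq s w \<phi>)"
  have ap\<phi>: "approx_seq s w \<phi>" unfolding \<phi>_def using ex by (rule someI_ex)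
  note t = approx_seqD(1)[OF ap\<phi>]
  have l: "(\<lambda>k. D12sq_test (\<phi> k)) \<longlonglongrightarrow> (lim (\<lambda>k. nQ (\<phi> k)))^2"
    by (rule D_from_nQ[OF t approx_conv[OF ap\<phi>]])
  have "D12sq s w = (lim (\<lambda>k. nQ (\<phi> k)))^2"
    unfolding D12sq_def \<phi>_def[symmetric] by (rule limI[OF l])
  then show ?thesis by simp
qed

lemma ae_ex:
  assumes "AE x in (lborel :: (real ^ 'n::finite) measure). P x"
  shows "\<exists>x. P x"
proof (rule ccontr)
  assume "\<not> (\<exists>x. P x)"
  from assms obtain N where N: "{x \<in> space lborel. \<not> P x} \<subseteq> N" "emeasure lborel N = 0" "N \<in> sets lborel"
    by (rule AE_E)
  then have "UNIV \<subseteq> N" using \<open>\<not> (\<exists>x. P x)\<close> by auto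
  then have "emeasure lborel (UNIV :: (real^'n) set) \<le> emeasure lborel N"
    using N(3) by (intro emeasure_mono) auto
  then show False using N(2) by simp
qed

lemma emeasure_outside_ball:
  "emeasure lborel {x :: real ^ 'n::finite. R < norm x} = \<infinity>"
proof -
  have e: "{x :: real ^ 'n. R < norm x} = UNIV - cball 0 R" by auto
  have "emeasure lborel (UNIV - cball (0::real^'n) R) = emeasure lborel (UNIV :: (real^'n) set) - emeasure lborel (cball (0::real^'n) R)"
    by (rule emeasure_Diff) (use emeasure_lborel_cball_finite[of "0::real^'n" R] in auto)
  then show ?thesis unfolding e by simp
qed

lemma Gag_pos:
  fixes u :: "real ^ 'n::finite \<Rightarrow> real"
  assumes uE: "u \<in> Espace s" and u0: "\<not> (AE x in lborel. u x = 0)" and N: "CARD('n) \<ge> 3"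
  shows "Gag_enn s u \<noteq> 0"
proof
  assume G0: "Gag_enn s u = 0"
  have um[measurable]: "u \<in> borel_measurable lborel" using uE unfolding Espace_def by auto
  obtain \<phi> where ap: "approx_seq s u \<phi>" using uE unfolding Espace_def by auto
  define a where "a = real CARD('n) + 2 * s"
  have meas: "(\<lambda>x. \<integral>\<^sup>+ y. ennreal ((u x - u y)^2 / norm (x - y) powr a) \<partial>lborel) \<in> borel_measurable lborel"
    by measurable
  have "AE x in lborel. (\<integral>\<^sup>+ y. ennreal ((u x - u y)^2 / norm (x - y) powr a) \<partial>lborel) = 0"
    using G0 nn_integral_0_iff_AE[OF meas] unfolding Gag_enn_def a_def by simp
  then have "AE x in lborel. AE y in lborel. u y = u x"
  proof eventually_elim
    case (elim x)
    moreover have m2: "(\<lambda>y. ennreal ((u x - u y)^2 / norm (x - y) powr a)) \<in> borel_measurable lborel"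
      by measurable
    ultimately have "AE y in lborel. ennreal ((u x - u y)^2 / norm (x - y) powr a) = 0"
      using nn_integral_0_iff_AE[OF m2] by simp
    then show "AE y in lborel. u y = u x"
      using AE_lborel_singleton[of x] by eventually_elim auto
  qed
  then obtain x0 where x0: "AE y in lborel. u y = u x0" using ae_ex by blast
  define c where "c = u x0"
  have c0: "c \<noteq> 0"
  proof
    assume "c = 0"
    then have "AE y in lborel. u y = 0" using x0 unfolding c_def by simp
    then show False using u0 by simp
  qed
  define q where "q = critS CARD('n)"
  have "Lp_pow q (\<lambda>x. \<phi> k x - u x) = \<infinity>" for k
  proof -
    have tk: "test_fun (\<phi> k)" using approx_seqD(1)[OF ap] .
    have [measurable]: "\<phi> k \<in> borel_measurable lborel" using test_fun_measurable[OF tk] by simp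
    obtain R where R: "\<And>x. R < norm x \<Longrightarrow> \<phi> k x = 0" using test_fun_support0[OF tk] by blast
    have AEle: "AE x in lborel. ennreal (\<bar>c\<bar> powr q) * indicator {x :: real^'n. R < norm x} x \<le> ennreal (\<bar>\<phi> k x - u x\<bar> powr q)"
      using x0
    proof eventually_elim
      case (elim x)
      then have ux: "u x = u x0" .
      show "ennreal (\<bar>c\<bar> powr q) * indicator {x :: real^'n. R < norm x} x \<le> ennreal (\<bar>\<phi> k x - u x\<bar> powr q)"
      proof (cases "R < norm x")
        case True
        then show ?thesis using R[OF True] ux unfolding c_def by simp
      qed simp
    qed
    have "(\<integral>\<^sup>+ x. ennreal (\<bar>c\<bar> powr q) * indicator {x :: real^'n. R < norm x} x \<partial>lborel) \<le> (\<integral>\<^sup>+ x. ennreal (\<bar>\<phi> k x - u x\<bar> powr q) \<partial>lborel)"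
      using nn_integral_mono_AE[OF AEle] by simp
    then have "(\<integral>\<^sup>+ x. ennreal (\<bar>c\<bar> powr q) * indicator {x :: real^'n. R < norm x} x \<partial>lborel) \<le> Lp_pow q (\<lambda>x. \<phi> k x - u x)"
      unfolding Lp_pow_def .
    moreover have "(\<integral>\<^sup>+ x. ennreal (\<bar>c\<bar> powr q) * indicator {x :: real^'n. R < norm x} x \<partial>lborel) = \<infinity>"
    proof -
      have em: "emeasure lborel {x :: real^'n. R < norm x} = \<infinity>" by (rule emeasure_outside_ball)
      have cz: "ennreal (\<bar>c\<bar> powr q) \<noteq> 0" using c0 by simp
      show ?thesis by (subst nn_integral_cmult_indicator) (use em cz in auto)
    qed
    ultimately show ?thesis by (simp add: top_unique)
  qed
  moreover have "(\<lambda>k. Lp_pow q (\<lambda>x. \<phi> k x - u x)) \<longlonglongrightarrow> 0"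
    unfolding q_def by (rule approx_seqD(3)[OF ap])
  ultimately have "(\<lambda>k. \<infinity> :: ennreal) \<longlonglongrightarrow> 0" by simp
  then show False by (simp add: LIMSEQ_const_iff)
qed

definition kf :: "real \<Rightarrow> real \<Rightarrow> real \<Rightarrow> ennreal" where
  "kf \<gamma> \<beta> t = ennreal (t powr (- \<gamma>)) * indicator {0..1} t + ennreal (t powr (- \<beta>)) * indicator {1..} t"

definition hf :: "real \<Rightarrow> real \<Rightarrow> real \<Rightarrow> ennreal" where
  "hf \<gamma> \<beta> t = (if t = 0 then \<infinity> else kf \<gamma> \<beta> t + kf \<gamma> \<beta> (- t))"

lemma kf_meas[measurable]: "kf \<gamma> \<beta> \<in> borel_measurable borel"
  unfolding kf_def by measurable

lemma hf_meas[measurable]: "hf \<gamma> \<beta> \<in> borel_measurable borel"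
  unfolding hf_def by measurable

lemma kf_int:
  assumes "0 \<le> \<gamma>" "\<gamma> < 1" "1 < \<beta>"
  shows "(\<integral>\<^sup>+ t. kf \<gamma> \<beta> t \<partial>lborel) < \<infinity>"
proof -
  have i1: "(\<integral>\<^sup>+ t. ennreal (t powr (- \<gamma>)) * indicator {0..1} t \<partial>lborel) = ennreal (1 powr (- \<gamma> + 1) / (- \<gamma> + 1))"
    by (rule nn_integral_has_integral_lebesgue') (use has_integral_powr_from_0[of "- \<gamma>" 1] assms in auto)
  have i2: "(\<integral>\<^sup>+ t. ennreal (t powr (- \<beta>)) * indicator {1..} t \<partial>lborel) = ennreal (- (1 powr (- \<beta> + 1)) / (- \<beta> + 1))"
    by (rule nn_integral_has_integral_lebesgue') (use has_integral_powr_to_inf[of "- \<beta>" 1] assms in auto)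
  have "(\<integral>\<^sup>+ t. kf \<gamma> \<beta> t \<partial>lborel) = (\<integral>\<^sup>+ t. ennreal (t powr (- \<gamma>)) * indicator {0..1} t \<partial>lborel) + (\<integral>\<^sup>+ t. ennreal (t powr (- \<beta>)) * indicator {1..} t \<partial>lborel)"
    unfolding kf_def by (rule nn_integral_add) measurable
  then show ?thesis using i1 i2 by simp
qed

lemma kf_reflect: "(\<integral>\<^sup>+ t. kf \<gamma> \<beta> (- t) \<partial>lborel) = (\<integral>\<^sup>+ t. kf \<gamma> \<beta> t \<partial>lborel)"
proof -
  have "(\<integral>\<^sup>+ t. kf \<gamma> \<beta> t \<partial>lborel) = (\<integral>\<^sup>+ t. kf \<gamma> \<beta> t \<partial>(distr lborel borel uminus))"
    by (simp add: lborel_distr_uminus)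
  also have "\<dots> = (\<integral>\<^sup>+ t. kf \<gamma> \<beta> (- t) \<partial>lborel)"
    by (rule nn_integral_distr) auto
  finally show ?thesis by simp
qed

lemma hf_int:
  assumes "0 \<le> \<gamma>" "\<gamma> < 1" "1 < \<beta>"
  shows "(\<integral>\<^sup>+ t. hf \<gamma> \<beta> t \<partial>lborel) < \<infinity>"
proof -
  have "(\<integral>\<^sup>+ t. hf \<gamma> \<beta> t \<partial>lborel) = (\<integral>\<^sup>+ t. kf \<gamma> \<beta> t + kf \<gamma> \<beta> (- t) \<partial>lborel)"
    by (rule nn_integral_cong_AE) (use AE_lborel_singleton[of 0] in \<open>eventually_elim, simp add: hf_def\<close>)
  also have "\<dots> = (\<integral>\<^sup>+ t. kf \<gamma> \<beta> t \<partial>lborel) + (\<integral>\<^sup>+ t. kf \<gamma> \<beta> (- t) \<partial>lborel)"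
    by (rule nn_integral_add) measurable
  also have "\<dots> = 2 * (\<integral>\<^sup>+ t. kf \<gamma> \<beta> t \<partial>lborel)" unfolding kf_reflect by (simp add: mult_2)
  finally show ?thesis using kf_int[OF assms] by (simp add: ennreal_mult_less_top)
qed

lemma hf_pos: "hf \<gamma> \<beta> t \<noteq> 0"
proof (cases "t = 0")
  case False
  then have "kf \<gamma> \<beta> t + kf \<gamma> \<beta> (- t) \<noteq> 0"
    by (cases "t > 0"; cases "\<bar>t\<bar> \<le> 1") (auto simp: kf_def indicator_def)
  then show ?thesis using False by (simp add: hf_def)
qed (simp add: hf_def)

definition gf :: "real \<Rightarrow> real \<Rightarrow> real \<Rightarrow> real" where
  "gf \<gamma> \<beta> r = (if r \<le> 1 then r powr (- \<gamma>) else r powr (- \<beta>))"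

lemma hf_ge_gf:
  assumes "t \<noteq> 0"
  shows "ennreal (gf \<gamma> \<beta> \<bar>t\<bar>) \<le> hf \<gamma> \<beta> t"
proof -
  have "ennreal (gf \<gamma> \<beta> \<bar>t\<bar>) \<le> kf \<gamma> \<beta> t + kf \<gamma> \<beta> (- t)"
  proof (cases "t > 0")
    case True
    then have "ennreal (gf \<gamma> \<beta> \<bar>t\<bar>) \<le> kf \<gamma> \<beta> t"
      by (cases "t \<le> 1") (auto simp: kf_def gf_def indicator_def)
    then show ?thesis by (simp add: add_increasing2)
  next
    case False
    then have "t < 0" using assms by simp
    then have "ennreal (gf \<gamma> \<beta> \<bar>t\<bar>) \<le> kf \<gamma> \<beta> (- t)"
      by (cases "- t \<le> 1") (auto simp: kf_def gf_def indicator_def)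
    then show ?thesis by (simp add: add_increasing)
  qed
  then show ?thesis using assms by (simp add: hf_def)
qed

definition Fk :: "real \<Rightarrow> 'a::euclidean_space \<Rightarrow> real" where
  "Fk a z = min ((norm z)^2) 1 / norm z powr a"

lemma Fk_meas[measurable]: "Fk a \<in> borel_measurable borel"
  unfolding Fk_def by measurable

lemma prod_top_ennreal:
  assumes "finite A" "b \<in> A" "f b = \<infinity>" "\<And>x. x \<in> A \<Longrightarrow> f x \<noteq> (0::ennreal)"
  shows "prod f A = \<infinity>"
proof -
  have "prod f A = f b * prod f (A - {b})" using assms(1,2) by (rule prod.remove)
  moreover have "prod f (A - {b}) \<noteq> 0" using assms(1,4) by (auto simp: ennreal_prod_eq_0)
  ultimately show ?thesis using assms(3) by simp
qed

lemma Fk_le_prod: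
  fixes z :: "'a::euclidean_space"
  assumes g: "real DIM('a) * \<gamma> = a - 2" and b: "real DIM('a) * \<beta> = a" and "0 \<le> \<gamma>" "0 \<le> \<beta>"
  shows "ennreal (Fk a z) \<le> (\<Prod>b\<in>Basis. hf \<gamma> \<beta> (z \<bullet> b))"
proof (cases "\<exists>b\<in>Basis. z \<bullet> b = 0")
  case True
  then obtain b0 where b0: "b0 \<in> Basis" "z \<bullet> b0 = 0" by blast
  have "(\<Prod>b\<in>Basis. hf \<gamma> \<beta> (z \<bullet> b)) = \<infinity>"
    by (rule prod_top_ennreal[OF finite_Basis b0(1)]) (use b0 hf_pos in \<open>auto simp: hf_def\<close>)
  then show ?thesis by simp
next
  case False
  then have nz: "\<And>b. b \<in> Basis \<Longrightarrow> z \<bullet> b \<noteq> 0" by blast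
  have "z \<noteq> 0" using nz[OF SOME_Basis] by auto
  define r where "r = norm z"
  have r: "r > 0" unfolding r_def using \<open>z \<noteq> 0\<close> by simp
  have cb: "\<And>b. b \<in> Basis \<Longrightarrow> \<bar>z \<bullet> b\<bar> \<le> r" unfolding r_def by (rule Basis_le_norm)
  have cp: "\<And>b. b \<in> Basis \<Longrightarrow> \<bar>z \<bullet> b\<bar> > 0" using nz by simp
  have gf0: "gf \<gamma> \<beta> t \<ge> 0" for t unfolding gf_def by simp
  have real: "Fk a z \<le> (\<Prod>b\<in>Basis. gf \<gamma> \<beta> \<bar>z \<bullet> b\<bar>)"
  proof (cases "r \<le> 1")
    case True
    have "(\<Prod>b\<in>(Basis::'a set). r powr (- \<gamma>)) \<le> (\<Prod>b\<in>Basis. gf \<gamma> \<beta> \<bar>z \<bullet> b\<bar>)"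
    proof (rule prod_mono)
      fix b :: 'a assume bB: "b \<in> Basis"
      have "r powr (- \<gamma>) \<le> \<bar>z \<bullet> b\<bar> powr (- \<gamma>)"
        by (rule powr_mono2') (use assms cp[OF bB] cb[OF bB] in auto)
      moreover have "gf \<gamma> \<beta> \<bar>z \<bullet> b\<bar> = \<bar>z \<bullet> b\<bar> powr (- \<gamma>)"
        unfolding gf_def using cb[OF bB] True by simp
      ultimately show "0 \<le> r powr (- \<gamma>) \<and> r powr (- \<gamma>) \<le> gf \<gamma> \<beta> \<bar>z \<bullet> b\<bar>" by simp
    qed
    moreover have "(\<Prod>b\<in>(Basis::'a set). r powr (- \<gamma>)) = r powr (2 - a)"
    proof -
      have "(\<Prod>b\<in>(Basis::'a set). r powr (- \<gamma>)) = (r powr (- \<gamma>)) ^ DIM('a)" by simp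
      also have "\<dots> = r powr (real DIM('a) * (- \<gamma>))" using r by (simp add: powr_power)
      also have "\<dots> = r powr (2 - a)"
      proof -
        have "real DIM('a) * (- \<gamma>) = 2 - a" using g by simp
        then show ?thesis by simp
      qed
      finally show ?thesis .
    qed
    moreover have "Fk a z = r powr (2 - a)"
    proof -
      have "r^2 \<le> 1" using r True by (intro power_le_one) auto
      then have "min (r^2) 1 = r^2" by (rule min_absorb1)
      then have "Fk a z = r^2 / r powr a" unfolding Fk_def r_def[symmetric] by simp
      also have "\<dots> = r powr 2 / r powr a" using r by (simp add: powr_numeral)
      also have "\<dots> = r powr (2 - a)" by (simp add: powr_diff)
      finally show ?thesis .
    qed
    ultimately show ?thesis by simp
  next
    case False
    have "(\<Prod>b\<in>(Basis::'a set). r powr (- \<beta>)) \<le> (\<Prod>b\<in>Basis. gf \<gamma> \<beta> \<bar>z \<bullet> b\<bar>)"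
    proof (rule prod_mono)
      fix b :: 'a assume bB: "b \<in> Basis"
      have "r powr (- \<beta>) \<le> gf \<gamma> \<beta> \<bar>z \<bullet> b\<bar>"
      proof (cases "\<bar>z \<bullet> b\<bar> \<le> 1")
        case True
        have "r powr (- \<beta>) \<le> 1 powr (- \<beta>)"
          by (rule powr_mono2') (use assms False in auto)
        also have "\<dots> \<le> \<bar>z \<bullet> b\<bar> powr (- \<gamma>)"
          using powr_mono2'[of "- \<gamma>" "\<bar>z \<bullet> b\<bar>" 1] assms cp[OF bB] True by simp
        finally show ?thesis unfolding gf_def using True by simp
      next
        case F2: False
        have "r powr (- \<beta>) \<le> \<bar>z \<bullet> b\<bar> powr (- \<beta>)"
          by (rule powr_mono2') (use assms cp[OF bB] cb[OF bB] in auto)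
        then show ?thesis unfolding gf_def using F2 by simp
      qed
      then show "0 \<le> r powr (- \<beta>) \<and> r powr (- \<beta>) \<le> gf \<gamma> \<beta> \<bar>z \<bullet> b\<bar>" by simp
    qed
    moreover have "(\<Prod>b\<in>(Basis::'a set). r powr (- \<beta>)) = r powr (- a)"
    proof -
      have "(\<Prod>b\<in>(Basis::'a set). r powr (- \<beta>)) = (r powr (- \<beta>)) ^ DIM('a)" by simp
      also have "\<dots> = r powr (real DIM('a) * (- \<beta>))" using r by (simp add: powr_power)
      also have "\<dots> = r powr (- a)"
      proof -
        have "real DIM('a) * (- \<beta>) = - a" using b by simp
        then show ?thesis by simp
      qed
      finally show ?thesis .
    qed
    moreover have "Fk a z = r powr (- a)"
    proof -
      have "1 \<le> r^2" using False by (intro one_le_power) auto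
      then have "min (r^2) 1 = 1" by (rule min_absorb2)
      then have "Fk a z = 1 / r powr a" unfolding Fk_def r_def[symmetric] by simp
      then show ?thesis by (simp add: powr_minus_divide)
    qed
    ultimately show ?thesis by simp
  qed
  have "ennreal (Fk a z) \<le> ennreal (\<Prod>b\<in>Basis. gf \<gamma> \<beta> \<bar>z \<bullet> b\<bar>)" using real by (rule ennreal_leI)
  also have "\<dots> = (\<Prod>b\<in>Basis. ennreal (gf \<gamma> \<beta> \<bar>z \<bullet> b\<bar>))" by (rule prod_ennreal[symmetric]) (rule gf0)
  also have "\<dots> \<le> (\<Prod>b\<in>Basis. hf \<gamma> \<beta> (z \<bullet> b))"
    by (rule prod_mono_ennreal) (rule hf_ge_gf[OF nz])
  finally show ?thesis .
qed

lemma Fk_int: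
  fixes s :: real
  assumes "0 < s" "s < 1" "DIM('a::euclidean_space) \<ge> 2"
  shows "(\<integral>\<^sup>+ z. ennreal (Fk (real DIM('a) + 2 * s) (z :: 'a)) \<partial>lborel) < \<infinity>"
proof -
  define a where "a = real DIM('a) + 2 * s"
  define \<gamma> where "\<gamma> = (a - 2) / real DIM('a)"
  define \<beta> where "\<beta> = a / real DIM('a)"
  have D: "real DIM('a) \<ge> 2" using assms(3) by simp
  have g: "real DIM('a) * \<gamma> = a - 2" and b: "real DIM('a) * \<beta> = a" unfolding \<gamma>_def \<beta>_def using D by auto
  have g0: "0 \<le> \<gamma>" unfolding \<gamma>_def a_def using D assms by simp
  have g1: "\<gamma> < 1" unfolding \<gamma>_def a_def using D assms by (simp add: divide_less_eq)
  have b1: "1 < \<beta>" unfolding \<beta>_def a_def using D assms by (simp add: less_divide_eq)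
  have "(\<integral>\<^sup>+ z. ennreal (Fk a (z :: 'a)) \<partial>lborel) \<le> (\<integral>\<^sup>+ z. (\<Prod>b\<in>Basis. hf \<gamma> \<beta> ((z :: 'a) \<bullet> b)) \<partial>lborel)"
    by (rule nn_integral_mono) (rule Fk_le_prod[OF g b g0], use b1 in simp)
  also have "\<dots> = (\<Prod>b\<in>(Basis::'a set). (\<integral>\<^sup>+ t. hf \<gamma> \<beta> t \<partial>lborel))"
    by (rule nn_integral_lborel_prod) auto
  also have "\<dots> = (\<integral>\<^sup>+ t. hf \<gamma> \<beta> t \<partial>lborel) ^ DIM('a)" by simp
  also have "\<dots> < \<infinity>" using hf_int[OF g0 g1 b1] by (simp add: power_less_top_ennreal)
  finally show ?thesis unfolding a_def .
qed

lemma nn_transl: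
  fixes G :: "'a::euclidean_space \<Rightarrow> ennreal"
  assumes [measurable]: "G \<in> borel_measurable borel"
  shows "(\<integral>\<^sup>+ x. G (c + x) \<partial>lborel) = (\<integral>\<^sup>+ x. G x \<partial>lborel)"
proof -
  have "(\<integral>\<^sup>+ x. G x \<partial>lborel) = (\<integral>\<^sup>+ x. G x \<partial>(distr lborel borel ((+) c)))"
    by (simp add: lborel_distr_plus)
  also have "\<dots> = (\<integral>\<^sup>+ x. G (c + x) \<partial>lborel)"
    by (rule nn_integral_distr) auto
  finally show ?thesis by simp
qed

lemma Fk_meas'[measurable (raw)]:
  "g \<in> borel_measurable M \<Longrightarrow> (\<lambda>x. Fk a (g x)) \<in> borel_measurable M"
  by (rule measurable_compose[OF _ Fk_meas])

lemma Fk_transl: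
  fixes x :: "'a::euclidean_space"
  shows "(\<integral>\<^sup>+ y. ennreal (Fk a (x - y)) \<partial>lborel) = (\<integral>\<^sup>+ z. ennreal (Fk a (z::'a)) \<partial>lborel)"
proof -
  have "Fk a (x - y) = Fk a (- x + y)" for y unfolding Fk_def by (simp add: norm_minus_commute)
  then have "(\<integral>\<^sup>+ y. ennreal (Fk a (x - y)) \<partial>lborel) = (\<integral>\<^sup>+ y. ennreal (Fk a (- x + y)) \<partial>lborel)" by simp
  also have "\<dots> = (\<integral>\<^sup>+ z. ennreal (Fk a (z::'a)) \<partial>lborel)" by (rule nn_transl[where G="\<lambda>z. ennreal (Fk a z)"]) measurable
  finally show ?thesis .
qed

lemma Fk_transl2:
  fixes y :: "'a::euclidean_space"
  shows "(\<integral>\<^sup>+ x. ennreal (Fk a (x - y)) \<partial>lborel) = (\<integral>\<^sup>+ z. ennreal (Fk a (z::'a)) \<partial>lborel)"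
proof -
  have "(\<integral>\<^sup>+ x. ennreal (Fk a (x - y)) \<partial>lborel) = (\<integral>\<^sup>+ x. ennreal (Fk a (- y + x)) \<partial>lborel)" by simp
  also have "\<dots> = (\<integral>\<^sup>+ z. ennreal (Fk a (z::'a)) \<partial>lborel)" by (rule nn_transl[where G="\<lambda>z. ennreal (Fk a z)"]) measurable
  finally show ?thesis .
qed

lemma Fk_nonneg: "Fk a z \<ge> 0"
  unfolding Fk_def by simp

lemma Gag_test_fin:
  fixes f :: "real ^ 'n::finite \<Rightarrow> real"
  assumes f: "test_fun f" and s: "0 < s" "s < 1" and N: "CARD('n) \<ge> 2"
  shows "Gag_enn s f < \<infinity>"
proof -
  define a where "a = real CARD('n) + 2 * s"
  have [measurable]: "f \<in> borel_measurable borel" by (rule test_fun_measurable[OF f])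
  obtain L where L: "L \<ge> 0" "\<And>x y. \<bar>f x - f y\<bar> \<le> L * norm (x - y)" using test_fun_lipschitz[OF f] by blast
  obtain M where M: "M \<ge> 0" "\<And>x. \<bar>f x\<bar> \<le> M" using test_fun_bounded[OF f] by blast
  obtain R where R: "\<And>x. R < norm x \<Longrightarrow> f x = 0" using test_fun_support0[OF f] by blast
  define B where "B = cball (0 :: real ^ 'n) R"
  have [measurable]: "B \<in> sets borel" unfolding B_def by simp
  define C where "C = L^2 + 4 * M^2"
  have C0: "C \<ge> 0" unfolding C_def by simp
  define IF where "IF = (\<integral>\<^sup>+ z. ennreal (Fk a (z :: real ^ 'n)) \<partial>lborel)"
  have "(\<integral>\<^sup>+ z. ennreal (Fk (real DIM(real ^ 'n) + 2 * s) (z :: real ^ 'n)) \<partial>lborel) < \<infinity>"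
    by (rule Fk_int) (use s N in auto)
  then have IF: "IF < \<infinity>" unfolding IF_def a_def by simp
  have pt: "(f x - f y)^2 / norm (x - y) powr a \<le> C * indicator B x * Fk a (x - y) + C * indicator B y * Fk a (x - y)" for x y
  proof (cases "x \<in> B \<or> y \<in> B")
    case False
    then have "f x = 0" "f y = 0" using R unfolding B_def by auto
    then show ?thesis using C0 Fk_nonneg[of a "x - y"] by simp
  next
    case True
    define d where "d = norm (x - y)"
    have d0: "d \<ge> 0" unfolding d_def by simp
    have i1: "(f x - f y)^2 \<le> C * d^2"
    proof -
      have "(f x - f y)^2 = \<bar>f x - f y\<bar>^2" by simp
      also have "\<dots> \<le> (L * d)^2" unfolding d_def by (intro power_mono L(2)) auto
      also have "\<dots> = L^2 * d^2" by (simp add: power_mult_distrib)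
      also have "\<dots> \<le> C * d^2" unfolding C_def by (intro mult_right_mono) auto
      finally show ?thesis .
    qed
    have i2: "(f x - f y)^2 \<le> C"
    proof -
      have "\<bar>f x - f y\<bar> \<le> 2 * M" using M(2)[of x] M(2)[of y] by linarith
      then have "\<bar>f x - f y\<bar>^2 \<le> (2 * M)^2" by (intro power_mono) auto
      then have "(f x - f y)^2 \<le> 4 * M^2" by (simp add: power_mult_distrib)
    moreover have "L^2 \<ge> 0" by simp
    ultimately show ?thesis unfolding C_def by linarith
    qed
    have i3: "(f x - f y)^2 \<le> C * min (d^2) 1"
      using i1 i2 by (simp add: min_def)
    have ind: "indicator B x + indicator B y \<ge> (1::real)" using True by (auto simp: indicator_def)
    have "C * min (d^2) 1 \<le> C * min (d^2) 1 * (indicator B x + indicator B y)"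
    proof -
      have "C * min (d^2) 1 \<ge> 0" using C0 by simp
      from mult_left_mono[OF ind this] show ?thesis by simp
    qed
    with i3 have "(f x - f y)^2 \<le> C * (indicator B x + indicator B y) * min (d^2) 1"
      by (simp add: algebra_simps)
    then have "(f x - f y)^2 / d powr a \<le> C * (indicator B x + indicator B y) * min (d^2) 1 / d powr a"
      by (rule divide_right_mono) simp
    also have "\<dots> = C * indicator B x * Fk a (x - y) + C * indicator B y * Fk a (x - y)"
      unfolding Fk_def d_def by (simp add: algebra_simps add_divide_distrib)
    finally show ?thesis unfolding d_def .
  qed
  have "Gag_enn s f \<le> (\<integral>\<^sup>+ x. \<integral>\<^sup>+ y. ennreal (C * indicator B x * Fk a (x - y)) + ennreal (C * indicator B y * Fk a (x - y)) \<partial>lborel \<partial>lborel)"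
    unfolding Gag_enn_def a_def[symmetric]
  proof (intro nn_integral_mono)
    fix x y :: "real ^ 'n"
    have "ennreal ((f x - f y)^2 / norm (x - y) powr a) \<le> ennreal (C * indicator B x * Fk a (x - y) + C * indicator B y * Fk a (x - y))"
      by (rule ennreal_leI[OF pt])
    also have "\<dots> = ennreal (C * indicator B x * Fk a (x - y)) + ennreal (C * indicator B y * Fk a (x - y))"
      by (rule ennreal_plus) (use C0 Fk_nonneg[of a "x - y"] in \<open>auto intro!: mult_nonneg_nonneg\<close>)
    finally show "ennreal ((f x - f y)^2 / norm (x - y) powr a) \<le> ennreal (C * indicator B x * Fk a (x - y)) + ennreal (C * indicator B y * Fk a (x - y))" .
  qed
  also have "\<dots> = (\<integral>\<^sup>+ x. (\<integral>\<^sup>+ y. ennreal (C * indicator B x * Fk a (x - y)) \<partial>lborel) + (\<integral>\<^sup>+ y. ennreal (C * indicator B y * Fk a (x - y)) \<partial>lborel) \<partial>lborel)"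
    by (intro nn_integral_cong nn_integral_add) measurable
  also have "\<dots> = (\<integral>\<^sup>+ x. (\<integral>\<^sup>+ y. ennreal (C * indicator B x * Fk a (x - y)) \<partial>lborel) \<partial>lborel) + (\<integral>\<^sup>+ x. (\<integral>\<^sup>+ y. ennreal (C * indicator B y * Fk a (x - y)) \<partial>lborel) \<partial>lborel)"
    by (rule nn_integral_add) measurable
  also have "(\<integral>\<^sup>+ x. (\<integral>\<^sup>+ y. ennreal (C * indicator B x * Fk a (x - y)) \<partial>lborel) \<partial>lborel) = (\<integral>\<^sup>+ x. ennreal (C * indicator B x) * IF \<partial>lborel)"
  proof (rule nn_integral_cong)
    fix x :: "real ^ 'n"
    have "(\<integral>\<^sup>+ y. ennreal (C * indicator B x * Fk a (x - y)) \<partial>lborel) = (\<integral>\<^sup>+ y. ennreal (C * indicator B x) * ennreal (Fk a (x - y)) \<partial>lborel)"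
      by (intro nn_integral_cong ennreal_mult) (use C0 Fk_nonneg in \<open>auto intro!: mult_nonneg_nonneg\<close>)
    also have "\<dots> = ennreal (C * indicator B x) * (\<integral>\<^sup>+ y. ennreal (Fk a (x - y)) \<partial>lborel)"
      by (rule nn_integral_cmult) measurable
    finally show "(\<integral>\<^sup>+ y. ennreal (C * indicator B x * Fk a (x - y)) \<partial>lborel) = ennreal (C * indicator B x) * IF"
      unfolding IF_def Fk_transl .
  qed
  also have "(\<integral>\<^sup>+ x. (\<integral>\<^sup>+ y. ennreal (C * indicator B y * Fk a (x - y)) \<partial>lborel) \<partial>lborel) = (\<integral>\<^sup>+ y. (\<integral>\<^sup>+ x. ennreal (C * indicator B y * Fk a (x - y)) \<partial>lborel) \<partial>lborel)"
    by (rule lborel_pair.Fubini'[symmetric]) measurable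
  also have "\<dots> = (\<integral>\<^sup>+ y. ennreal (C * indicator B y) * IF \<partial>lborel)"
  proof (rule nn_integral_cong)
    fix y :: "real ^ 'n"
    have "(\<integral>\<^sup>+ x. ennreal (C * indicator B y * Fk a (x - y)) \<partial>lborel) = (\<integral>\<^sup>+ x. ennreal (C * indicator B y) * ennreal (Fk a (x - y)) \<partial>lborel)"
      by (intro nn_integral_cong ennreal_mult) (use C0 Fk_nonneg in \<open>auto intro!: mult_nonneg_nonneg\<close>)
    also have "\<dots> = ennreal (C * indicator B y) * (\<integral>\<^sup>+ x. ennreal (Fk a (x - y)) \<partial>lborel)"
      by (rule nn_integral_cmult) measurable
    finally show "(\<integral>\<^sup>+ x. ennreal (C * indicator B y * Fk a (x - y)) \<partial>lborel) = ennreal (C * indicator B y) * IF"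
      unfolding IF_def Fk_transl2 .
  qed
  also have "(\<integral>\<^sup>+ x. ennreal (C * indicator B x) * IF \<partial>lborel) = ennreal C * emeasure lborel B * IF"
  proof -
    have "(\<integral>\<^sup>+ x. ennreal (C * indicator B x) * IF \<partial>lborel) = (\<integral>\<^sup>+ x. (ennreal C * IF) * indicator B x \<partial>lborel)"
      by (intro nn_integral_cong) (simp add: indicator_def mult.commute)
    also have "\<dots> = ennreal C * IF * emeasure lborel B"
      by (rule nn_integral_cmult_indicator) (simp add: B_def)
    finally show ?thesis by (simp add: mult_ac)
  qed
  also have "\<dots> + \<dots> < \<infinity>"
  proof -
    have "emeasure lborel B < \<infinity>" unfolding B_def by (rule emeasure_lborel_cball_finite)
    then have "ennreal C * emeasure lborel B * IF < \<infinity>" using IF by (simp add: ennreal_mult_less_top)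
    then show ?thesis by simp
  qed
  finally show ?thesis .
qed

lemma Gag_enn_split:
  fixes f g :: "real ^ 'n::finite \<Rightarrow> real"
  assumes [measurable]: "f \<in> borel_measurable lborel" "g \<in> borel_measurable lborel"
  shows "Gag_enn s f \<le> 2 * Gag_enn s g + 2 * Gag_enn s (\<lambda>x. f x - g x)"
proof -
  define a where "a = real CARD('n) + 2 * s"
  define A where "A x y = (g x - g y)^2 / norm (x - y) powr a" for x y
  define B where "B x y = ((f x - g x) - (f y - g y))^2 / norm (x - y) powr a" for x y
  have A0: "A x y \<ge> 0" and B0: "B x y \<ge> 0" for x y unfolding A_def B_def by auto
  have [measurable]: "(\<lambda>(x, y). A x y) \<in> borel_measurable (lborel \<Otimes>\<^sub>M lborel)"
    "(\<lambda>(x, y). B x y) \<in> borel_measurable (lborel \<Otimes>\<^sub>M lborel)"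
    unfolding A_def B_def by measurable
  have pt: "ennreal ((f x - f y)^2 / norm (x - y) powr a) \<le> 2 * ennreal (A x y) + 2 * ennreal (B x y)" for x y
  proof -
    have sq: "(u + v)^2 \<le> 2 * u^2 + 2 * v^2" for u v :: real
    proof -
      have "(u + v)^2 + (u - v)^2 = 2 * u^2 + 2 * v^2" by (simp add: power2_sum power2_diff)
      moreover have "(u - v)^2 \<ge> 0" by simp
      ultimately show ?thesis by linarith
    qed
    have "(f x - f y)^2 = ((g x - g y) + ((f x - g x) - (f y - g y)))^2" by (simp add: algebra_simps)
    also have "\<dots> \<le> 2 * (g x - g y)^2 + 2 * ((f x - g x) - (f y - g y))^2" by (rule sq)
    finally have "(f x - f y)^2 / norm (x - y) powr a \<le> (2 * (g x - g y)^2 + 2 * ((f x - g x) - (f y - g y))^2) / norm (x - y) powr a"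
      by (rule divide_right_mono) simp
    also have "\<dots> = 2 * A x y + 2 * B x y" unfolding A_def B_def by (simp add: add_divide_distrib)
    finally have "ennreal ((f x - f y)^2 / norm (x - y) powr a) \<le> ennreal (2 * A x y + 2 * B x y)" by (rule ennreal_leI)
    also have "\<dots> = 2 * ennreal (A x y) + 2 * ennreal (B x y)"
      using A0[of x y] B0[of x y] by (simp add: ennreal_plus ennreal_mult)
    finally show ?thesis .
  qed
  have "Gag_enn s f \<le> (\<integral>\<^sup>+ x. \<integral>\<^sup>+ y. 2 * ennreal (A x y) + 2 * ennreal (B x y) \<partial>lborel \<partial>lborel)"
    unfolding Gag_enn_def a_def[symmetric] by (intro nn_integral_mono pt)
  also have "\<dots> = (\<integral>\<^sup>+ x. 2 * (\<integral>\<^sup>+ y. ennreal (A x y) \<partial>lborel) + 2 * (\<integral>\<^sup>+ y. ennreal (B x y) \<partial>lborel) \<partial>lborel)"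
  proof (rule nn_integral_cong)
    fix x :: "real ^ 'n"
    have "(\<integral>\<^sup>+ y. 2 * ennreal (A x y) + 2 * ennreal (B x y) \<partial>lborel) = (\<integral>\<^sup>+ y. 2 * ennreal (A x y) \<partial>lborel) + (\<integral>\<^sup>+ y. 2 * ennreal (B x y) \<partial>lborel)"
      by (rule nn_integral_add) measurable
    also have "\<dots> = 2 * (\<integral>\<^sup>+ y. ennreal (A x y) \<partial>lborel) + 2 * (\<integral>\<^sup>+ y. ennreal (B x y) \<partial>lborel)"
      by (subst nn_integral_cmult, measurable)+
    finally show "(\<integral>\<^sup>+ y. 2 * ennreal (A x y) + 2 * ennreal (B x y) \<partial>lborel) = 2 * (\<integral>\<^sup>+ y. ennreal (A x y) \<partial>lborel) + 2 * (\<integral>\<^sup>+ y. ennreal (B x y) \<partial>lborel)" .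
  qed
  also have "\<dots> = (\<integral>\<^sup>+ x. 2 * (\<integral>\<^sup>+ y. ennreal (A x y) \<partial>lborel) \<partial>lborel) + (\<integral>\<^sup>+ x. 2 * (\<integral>\<^sup>+ y. ennreal (B x y) \<partial>lborel) \<partial>lborel)"
    by (rule nn_integral_add) measurable
  also have "(\<integral>\<^sup>+ x. 2 * (\<integral>\<^sup>+ y. ennreal (A x y) \<partial>lborel) \<partial>lborel) = 2 * Gag_enn s g"
    unfolding Gag_enn_def a_def[symmetric] A_def by (rule nn_integral_cmult) measurable
  also have "(\<integral>\<^sup>+ x. 2 * (\<integral>\<^sup>+ y. ennreal (B x y) \<partial>lborel) \<partial>lborel) = 2 * Gag_enn s (\<lambda>x. f x - g x)"
    unfolding Gag_enn_def a_def[symmetric] B_def by (rule nn_integral_cmult) measurable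
  finally show ?thesis .
qed

lemma ae_subseq:
  fixes u :: "real ^ 'n::finite \<Rightarrow> real"
  assumes [measurable]: "u \<in> borel_measurable lborel" and \<phi>m[measurable]: "\<And>k. \<phi> k \<in> borel_measurable lborel"
    and q: "q > 0" and lim: "(\<lambda>k. Lp_pow q (\<lambda>x. \<phi> k x - u x)) \<longlonglongrightarrow> 0"
  shows "\<exists>\<rho>. strict_mono \<rho> \<and> (AE x in lborel. (\<lambda>n. \<phi> (\<rho> n) x) \<longlonglongrightarrow> u x)"
proof -
  obtain K0 where K0: "\<And>k. k \<ge> K0 \<Longrightarrow> Lp_pow q (\<lambda>x. \<phi> k x - u x) < 1"
    using order_tendstoD(2)[OF lim, of 1] by (auto simp: eventually_sequentially)
  define v where "v n x = \<bar>\<phi> (n + K0) x - u x\<bar> powr q" for n x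
  have vm[measurable]: "v n \<in> borel_measurable lborel" for n unfolding v_def by measurable
  have vint: "integrable lborel (v n)" for n
  proof (rule integrableI_nonneg)
    show "(\<integral>\<^sup>+ x. ennreal (v n x) \<partial>lborel) < \<infinity>"
    proof -
      have "(\<integral>\<^sup>+ x. ennreal (v n x) \<partial>lborel) < 1"
        using K0[of "n + K0"] unfolding v_def Lp_pow_def by simp
      also have "(1::ennreal) < \<infinity>" by simp
      finally show ?thesis .
    qed
  qed (auto simp: v_def)
  have eqv: "Lp_pow q (\<lambda>x. \<phi> (n + K0) x - u x) = ennreal (integral\<^sup>L lborel (v n))" for n
    unfolding Lp_pow_def v_def[symmetric] by (rule nn_integral_eq_integral[OF vint]) (auto simp: v_def)
  have "(\<lambda>n. Lp_pow q (\<lambda>x. \<phi> (n + K0) x - u x)) \<longlonglongrightarrow> 0"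
    using LIMSEQ_ignore_initial_segment[OF lim, of K0] by simp
  then have "(\<lambda>n. ennreal (integral\<^sup>L lborel (v n))) \<longlonglongrightarrow> ennreal 0" unfolding eqv by simp
  then have l0: "(\<lambda>n. integral\<^sup>L lborel (v n)) \<longlonglongrightarrow> 0"
    by (subst (asm) tendsto_ennreal_iff) (auto simp: v_def intro!: integral_nonneg_AE)
  have "(\<lambda>n. \<integral>x. norm (v n x) \<partial>lborel) \<longlonglongrightarrow> 0"
  proof -
    have "(\<lambda>x. norm (v n x)) = v n" for n by (auto simp: v_def fun_eq_iff)
    then show ?thesis using l0 by simp
  qed
  from tendsto_L1_AE_subseq[OF vint this] obtain r where r: "strict_mono r" "AE x in lborel. (\<lambda>n. v (r n) x) \<longlonglongrightarrow> 0"
    by blast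
  define \<rho> where "\<rho> n = r n + K0" for n
  have sm: "strict_mono \<rho>" using r(1) unfolding \<rho>_def strict_mono_def by auto
  have "AE x in lborel. (\<lambda>n. \<phi> (\<rho> n) x) \<longlonglongrightarrow> u x"
    using r(2)
  proof eventually_elim
    case (elim x)
    then have "(\<lambda>n. (v (r n) x) powr (1 / q)) \<longlonglongrightarrow> 0 powr (1 / q)"
      by (intro tendsto_powr') (use q in \<open>auto simp: v_def\<close>)
    moreover have "(v (r n) x) powr (1 / q) = \<bar>\<phi> (\<rho> n) x - u x\<bar>" for n
      unfolding v_def \<rho>_def using q by (simp add: powr_powr)
    ultimately have "(\<lambda>n. \<bar>\<phi> (\<rho> n) x - u x\<bar>) \<longlonglongrightarrow> 0" by simp
    then have "(\<lambda>n. \<phi> (\<rho> n) x - u x) \<longlonglongrightarrow> 0" by (simp add: tendsto_rabs_zero_iff)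
    then show ?case by (simp add: LIM_zero_iff)
  qed
  then show ?thesis using sm by blast
qed

lemma Gag_fatou:
  fixes u :: "real ^ 'n::finite \<Rightarrow> real"
  assumes [measurable]: "u \<in> borel_measurable lborel" and \<phi>m[measurable]: "\<And>k. \<phi> k \<in> borel_measurable lborel"
    and conv: "AE x in lborel. (\<lambda>n. \<phi> n x) \<longlonglongrightarrow> u x"
  shows "Gag_enn s u \<le> liminf (\<lambda>n. Gag_enn s (\<phi> n))"
proof -
  define a where "a = real CARD('n) + 2 * s"
  define Tn where "Tn n x y = ennreal ((\<phi> n x - \<phi> n y)^2 / norm (x - y) powr a)" for n x y
  define Tu where "Tu x y = ennreal ((u x - u y)^2 / norm (x - y) powr a)" for x y
  have Tnm[measurable]: "(\<lambda>y. Tn n x y) \<in> borel_measurable lborel" for n x unfolding Tn_def by measurable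
  have Tnm2[measurable]: "(\<lambda>x. \<integral>\<^sup>+ y. Tn n x y \<partial>lborel) \<in> borel_measurable lborel" for n unfolding Tn_def by measurable
  have inner: "AE x in lborel. (\<integral>\<^sup>+ y. Tu x y \<partial>lborel) \<le> liminf (\<lambda>n. \<integral>\<^sup>+ y. Tn n x y \<partial>lborel)"
    using conv
  proof eventually_elim
    case (elim x)
    have "AE y in lborel. Tu x y = liminf (\<lambda>n. Tn n x y)"
      using conv
    proof eventually_elim
      case (elim y)
      have "(\<lambda>n. Tn n x y) \<longlonglongrightarrow> Tu x y"
      proof (cases "x = y")
        case True then show ?thesis unfolding Tn_def Tu_def by simp
      next
        case False
        then have nz: "norm (x - y) powr a \<noteq> 0" by simp
        show ?thesis
          unfolding Tn_def Tu_def by (intro tendsto_ennrealI tendsto_intros elim \<open>(\<lambda>n. \<phi> n x) \<longlonglongrightarrow> u x\<close> nz)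
      qed
      then show ?case by (simp add: lim_imp_Liminf)
    qed
    then have "(\<integral>\<^sup>+ y. Tu x y \<partial>lborel) = (\<integral>\<^sup>+ y. liminf (\<lambda>n. Tn n x y) \<partial>lborel)"
      by (rule nn_integral_cong_AE)
    also have "\<dots> \<le> liminf (\<lambda>n. \<integral>\<^sup>+ y. Tn n x y \<partial>lborel)"
      by (rule nn_integral_liminf) measurable
    finally show ?case .
  qed
  have "Gag_enn s u = (\<integral>\<^sup>+ x. \<integral>\<^sup>+ y. Tu x y \<partial>lborel \<partial>lborel)"
    unfolding Gag_enn_def Tu_def a_def ..
  also have "\<dots> \<le> (\<integral>\<^sup>+ x. liminf (\<lambda>n. \<integral>\<^sup>+ y. Tn n x y \<partial>lborel) \<partial>lborel)"
    by (rule nn_integral_mono_AE[OF inner])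
  also have "\<dots> \<le> liminf (\<lambda>n. \<integral>\<^sup>+ x. \<integral>\<^sup>+ y. Tn n x y \<partial>lborel \<partial>lborel)"
    by (rule nn_integral_liminf) measurable
  also have "\<dots> = liminf (\<lambda>n. Gag_enn s (\<phi> n))"
    unfolding Gag_enn_def Tn_def a_def ..
  finally show ?thesis .
qed

lemma Gag_fin:
  fixes u :: "real ^ 'n::finite \<Rightarrow> real"
  assumes uE: "u \<in> Espace s" and s: "0 < s" "s < 1" and N: "CARD('n) \<ge> 3"
  shows "Gag_enn s u < \<infinity>"
proof -
  have um[measurable]: "u \<in> borel_measurable lborel" using uE unfolding Espace_def by auto
  obtain \<phi> where ap: "approx_seq s u \<phi>" using uE unfolding Espace_def by auto
  note t = approx_seqD(1)[OF ap]
  have \<phi>m[measurable]: "\<phi> k \<in> borel_measurable lborel" for k using test_fun_measurable[OF t] by simp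
  define q where "q = critS CARD('n)"
  have q: "q > 0" unfolding q_def critS_def using N by (simp add: divide_pos_pos)
  obtain \<rho> where \<rho>: "strict_mono \<rho>" "AE x in lborel. (\<lambda>n. \<phi> (\<rho> n) x) \<longlonglongrightarrow> u x"
    using ae_subseq[OF um \<phi>m q approx_seqD(3)[OF ap, folded q_def]] by blast
  have C: "\<forall>e>0. \<exists>K. \<forall>k\<ge>K. \<forall>m\<ge>K. D12sq_test (\<lambda>x. \<phi> k x - \<phi> m x) + Gag s (\<lambda>x. \<phi> k x - \<phi> m x) < e"
    using ap unfolding approx_seq_def by (elim conjE)
  then obtain K where K: "\<forall>k\<ge>K. \<forall>m\<ge>K. D12sq_test (\<lambda>x. \<phi> k x - \<phi> m x) + Gag s (\<lambda>x. \<phi> k x - \<phi> m x) < 1"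
    by (meson zero_less_one)
  define Bd where "Bd = 2 * Gag_enn s (\<phi> K) + 2"
  have Bd: "Bd < \<infinity>"
  proof -
    have "Gag_enn s (\<phi> K) < \<infinity>" by (rule Gag_test_fin[OF t s]) (use N in simp)
    then show ?thesis unfolding Bd_def by (simp add: ennreal_mult_less_top)
  qed
  have bound: "Gag_enn s (\<phi> k) \<le> Bd" if k: "k \<ge> K" for k
  proof -
    have td: "test_fun (\<lambda>x. \<phi> k x - \<phi> K x)" by (rule test_fun_diff[OF t t])
    have fin: "Gag_enn s (\<lambda>x. \<phi> k x - \<phi> K x) < \<infinity>" by (rule Gag_test_fin[OF td s]) (use N in simp)
    have "D12sq_test (\<lambda>x. \<phi> k x - \<phi> K x) + Gag s (\<lambda>x. \<phi> k x - \<phi> K x) < 1" using K k by auto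
    moreover have "D12sq_test (\<lambda>x. \<phi> k x - \<phi> K x) \<ge> 0" by (rule Q_nonneg[OF td])
    ultimately have g1: "Gag s (\<lambda>x. \<phi> k x - \<phi> K x) < 1" by linarith
    have "Gag_enn s (\<lambda>x. \<phi> k x - \<phi> K x) = ennreal (Gag s (\<lambda>x. \<phi> k x - \<phi> K x))"
      unfolding Gag_def using fin by simp
    also have "\<dots> \<le> 1" using g1 by simp
    finally have g2: "Gag_enn s (\<lambda>x. \<phi> k x - \<phi> K x) \<le> 1" .
    have "Gag_enn s (\<phi> k) \<le> 2 * Gag_enn s (\<phi> K) + 2 * Gag_enn s (\<lambda>x. \<phi> k x - \<phi> K x)"
      by (rule Gag_enn_split) measurable
    also have "\<dots> \<le> 2 * Gag_enn s (\<phi> K) + 2 * 1" using g2 by (intro add_left_mono mult_left_mono) auto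
    finally show ?thesis unfolding Bd_def by simp
  qed
  have "Gag_enn s u \<le> liminf (\<lambda>n. Gag_enn s (\<phi> (\<rho> n)))"
    by (rule Gag_fatou[OF um _ \<rho>(2)]) measurable
  also have "\<dots> \<le> limsup (\<lambda>n. Gag_enn s (\<phi> (\<rho> n)))" by (rule Liminf_le_Limsup) simp
  also have "\<dots> \<le> Bd"
  proof (rule Limsup_bounded)
    show "\<forall>\<^sub>F n in sequentially. Gag_enn s (\<phi> (\<rho> n)) \<le> Bd"
      unfolding eventually_sequentially
      by (intro exI[of _ K] allI impI bound) (meson le_trans seq_suble[OF \<rho>(1)])
  qed
  also have "\<dots> < \<infinity>" by (rule Bd)
  finally show ?thesis .
qed

theorem lemma5p5:
  fixes s p :: real and u :: "real ^ 'n::finite \<Rightarrow> real"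
  assumes "CARD('n) \<ge> 3"
    and "0 < s" and "s < 1"
    and "critFrac CARD('n) s < p" and "p < critS CARD('n)"
    and "u \<in> Mset s p"
  shows "\<exists>v\<in>Espace s. \<not> ((\<lambda>t. Pfun s p (\<lambda>x. u x + t * v x)) has_real_derivative 0) (at 0)"
proof -
  define N where "N = real CARD('n)"
  have N3: "N \<ge> 3" unfolding N_def using assms(1) by simp
  have uE: "u \<in> Espace s" and u0: "\<not> (AE x in lborel. u x = 0)" and P0: "Pfun s p u = 0"
    using assms(6) unfolding Mset_def by auto
  have um: "u \<in> borel_measurable lborel" using uE unfolding Espace_def by auto
  have q1: "critS CARD('n) \<ge> 1"
    unfolding critS_def using N3 unfolding N_def by (simp add: field_simps)
  have p2: "p > 2"
  proof -
    have "critFrac CARD('n) s > 2"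
      unfolding critFrac_def using N3 assms(2,3) unfolding N_def by (simp add: field_simps)
    then show ?thesis using assms(4) by simp
  qed
  define D where "D = D12sq s u"
  define G where "G = Gag s u"
  define I where "I = integral\<^sup>L lborel (\<lambda>x. \<bar>u x\<bar> powr p)"
  have D0: "D \<ge> 0" unfolding D_def by (rule D12sq_nonneg[OF uE])
  have Gpos: "G > 0"
  proof -
    have "Gag_enn s u < \<infinity>" by (rule Gag_fin[OF uE assms(2,3,1)])
    moreover have "Gag_enn s u \<noteq> 0" by (rule Gag_pos[OF uE u0 assms(1)])
    ultimately show ?thesis unfolding G_def Gag_def
      by (simp add: enn2real_positive_iff less_top[symmetric] zero_less_iff_neq_zero)
  qed
  define X where "X = (N - 2) / 2 * D + (N - 2 * s) / 2 * G"
  have Xpos: "X > 0"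
  proof -
    have "(N - 2) / 2 * D \<ge> 0" using N3 D0 by simp
    moreover have "(N - 2 * s) / 2 * G > 0" using N3 assms(3) Gpos by simp
    ultimately show ?thesis unfolding X_def by linarith
  qed
  have XI: "N / p * I = X" using P0 unfolding Pfun_def X_def D_def G_def I_def N_def by simp
  define f where "f t = Pfun s p (\<lambda>x. u x + t * u x)" for t
  have feq: "f t = (1 + t)^2 * X - N / p * (\<bar>1 + t\<bar> powr p * I)" for t
  proof -
    have e: "(\<lambda>x. u x + t * u x) = (\<lambda>x. (1 + t) * u x)" by (simp add: fun_eq_iff algebra_simps)
    have "integral\<^sup>L lborel (\<lambda>x. \<bar>(1 + t) * u x\<bar> powr p) = \<bar>1 + t\<bar> powr p * I"
      unfolding I_def by (simp add: abs_mult powr_mult)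
    then show ?thesis
      unfolding f_def e Pfun_def D12sq_scale[OF uE q1] Gag_cmult[OF um] X_def D_def G_def N_def
      by (simp add: algebra_simps)
  qed
  have d1: "((\<lambda>t. (1 + t)^2 * X - N / p * ((1 + t) powr p * I)) has_real_derivative (2 * X - N / p * (p * I))) (at 0)"
    by (auto intro!: derivative_eq_intros)
  have d2: "(f has_real_derivative (2 * X - N / p * (p * I))) (at 0)"
  proof (rule has_field_derivative_transform_within_open[OF d1, of "{-1<..}"])
    fix t :: real assume "t \<in> {-1<..}"
    then show "(1 + t)^2 * X - N / p * ((1 + t) powr p * I) = f t" unfolding feq by simp
  qed auto
  have "N / p * (p * I) = p * (N / p * I)" by (simp add: algebra_simps)
  then have "N / p * (p * I) = p * X" by (simp only: XI)
  then have "2 * X - N / p * (p * I) = (2 - p) * X" by (simp add: algebra_simps)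
  moreover have "(2 - p) * X \<noteq> 0" using p2 Xpos by simp
  ultimately have nz: "2 * X - N / p * (p * I) \<noteq> 0" by simp
  show ?thesis
  proof (intro bexI[OF _ uE] notI)
    assume "((\<lambda>t. Pfun s p (\<lambda>x. u x + t * u x)) has_real_derivative 0) (at 0)"
    then have "(f has_real_derivative 0) (at 0)" unfolding f_def .
    from DERIV_unique[OF this d2] nz show False by simp
  qed
qed

end
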